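(* Let $G$ be a finite group, $H$ a nontrivial core-free subgroup, $\Omega=G/H$, $n=|G:H|$ and $\chi$ the permutation character of $G$ on $\Omega$. For a positive integer $t$ let $$Q(G,t)=\sum_{i=1}^k|x_i^G|\left(\frac{\chi(x_i)}{n}\right)^t,$$ where $x_1,\dots,x_k$ represent the conjugacy classes of elements of prime order in $G$. If $Q(G,t)<1$ then $d_G(H)\leqslant 2t-1$; in particular, if $Q(G,2)<1$ then $d_G(H)=3$.
   Context: Depth: for a finite group $G$, a subgroup $H$ and $m\geqslant 1$, let $(\mathbb{C}G)^{\otimes m}=\mathbb{C}G\otimes_{\mathbb{C}H}\cdots\otimes_{\mathbb{C}H}\mathbb{C}G$ ($m$ factors). For $n\geqslant 1$, the inclusion $\mathbb{C}H\subseteq\mathbb{C}G$ has depth $2n$ if $(\mathbb{C}G)^{\otimes(n+1)}$ is isomorphic, as a $(\mathbb{C}G,\mathbb{C}H)$-bimodule, to a direct summand of $\bigoplus_{i=1}^k(\mathbb{C}G)^{\otimes n}$ for some $k\geqslant 1$; it has depth $2n+1$ if the same holds for $(\mathbb{C}H,\mathbb{C}H)$-bimodules; it has depth $1$ if $\mathbb{C}G$ is isomorphic as a $(\mathbb{C}H,\mathbb{C}H)$-bimodule to a direct summand of $\bigoplus_{i=1}^k\mathbb{C}H$ for some $k\geqslant1$. The depth $d_G(H)$ is the least positive integer $n$ such that the inclusion has depth $n$. $H$ is core-free if $\bigcap_{g\in G}H^g=1$. *)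

theory Defs
  imports "HOL-Algebra.Multiplicative_Group" "HOL-Computational_Algebra.Primes" Complex_Main
begin

text \<open>For a group G and subgroup H, the m-fold tensor product
  CG (x)_CH ... (x)_CH CG has as C-basis the classes of m-tuples
  (g_1,...,g_m) of elements of G modulo the relation
  (g_1,...,g_m) ~ (g_1 h_1, h_1^-1 g_2 h_2, ..., h_(m-1)^-1 g_m), h_i in H
  (pure tensors g_1 (x) ... (x) g_m).\<close>

definition tuples :: "('a, 'b) monoid_scheme \<Rightarrow> nat \<Rightarrow> 'a list set" where
  "tuples G m = {xs. length xs = m \<and> set xs \<subseteq> carrier G}"

definition bal :: "('a, 'b) monoid_scheme \<Rightarrow> 'a set \<Rightarrow> 'a list \<Rightarrow> 'a list \<Rightarrow> bool" where
  "bal G H xs ys \<longleftrightarrow> length ys = length xs \<and>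
     (\<exists>hs. length hs = length xs - 1 \<and> set hs \<subseteq> H \<and>
        (let c = (\<lambda>j. if 0 < j \<and> j < length xs then hs ! (j - 1) else \<one>\<^bsub>G\<^esub>)
         in ys = map (\<lambda>i. inv\<^bsub>G\<^esub> (c i) \<otimes>\<^bsub>G\<^esub> xs ! i \<otimes>\<^bsub>G\<^esub> c (Suc i)) [0..<length xs]))"

definition balrel :: "('a, 'b) monoid_scheme \<Rightarrow> 'a set \<Rightarrow> 'a list set \<Rightarrow> ('a list \<times> 'a list) set" where
  "balrel G H X = {(xs, ys). xs \<in> X \<and> ys \<in> X \<and> bal G H xs ys}"

definition lmul :: "('a, 'b) monoid_scheme \<Rightarrow> 'a \<Rightarrow> 'a list \<Rightarrow> 'a list" where
  "lmul G g xs = (g \<otimes>\<^bsub>G\<^esub> hd xs) # tl xs"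

definition rmul :: "('a, 'b) monoid_scheme \<Rightarrow> 'a list \<Rightarrow> 'a \<Rightarrow> 'a list" where
  "rmul G xs h = butlast xs @ [last xs \<otimes>\<^bsub>G\<^esub> h]"

text \<open>A C-linear map C[X/~] -> C[Y/~] is given by a matrix M ys xs that is constant on
  classes.  It is a bimodule homomorphism for the (CL, CR)-bimodule structures
  (L, R subgroups acting on the left / right) iff the matrix is invariant under
  the simultaneous actions (linearity reduces commuting with CL and CR to commuting
  with the group elements of L and R).\<close>
definition well_def_mat ::
  "('a, 'b) monoid_scheme \<Rightarrow> 'a set \<Rightarrow> 'a list set \<Rightarrow> 'a list set \<Rightarrow> ('a list \<Rightarrow> 'a list \<Rightarrow> complex) \<Rightarrow> bool" where
  "well_def_mat G H Y X M \<longleftrightarrow>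
     (\<forall>ys\<in>Y. \<forall>ys'\<in>Y. \<forall>xs\<in>X. \<forall>xs'\<in>X. bal G H ys ys' \<and> bal G H xs xs' \<longrightarrow> M ys xs = M ys' xs')"

definition equiv_mat ::
  "('a, 'b) monoid_scheme \<Rightarrow> 'a set \<Rightarrow> 'a set \<Rightarrow> 'a list set \<Rightarrow> 'a list set \<Rightarrow> ('a list \<Rightarrow> 'a list \<Rightarrow> complex) \<Rightarrow> bool" where
  "equiv_mat G L R Y X M \<longleftrightarrow>
     (\<forall>a\<in>L. \<forall>b\<in>R. \<forall>ys\<in>Y. \<forall>xs\<in>X.
        M (rmul G (lmul G a ys) b) (rmul G (lmul G a xs) b) = M ys xs)"

text \<open>C[X/~] is isomorphic, as (CL,CR)-bimodule, to a direct summand of the direct sum of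
  k copies of C[Y/~]: there are bimodule maps iota : C[X/~] -> (C[Y/~])^k and
  pi : (C[Y/~])^k -> C[X/~] with pi o iota = id.\<close>
definition bimod_summand ::
  "('a, 'b) monoid_scheme \<Rightarrow> 'a set \<Rightarrow> 'a set \<Rightarrow> 'a set \<Rightarrow> 'a list set \<Rightarrow> 'a list set \<Rightarrow> bool" where
  "bimod_summand G H L R X Y \<longleftrightarrow>
     (\<exists>k::nat. k \<ge> 1 \<and>
       (\<exists>\<iota> \<pi> :: nat \<Rightarrow> 'a list \<Rightarrow> 'a list \<Rightarrow> complex.
          (\<forall>j<k. well_def_mat G H Y X (\<iota> j) \<and> equiv_mat G L R Y X (\<iota> j)
                \<and> well_def_mat G H X Y (\<pi> j) \<and> equiv_mat G L R X Y (\<pi> j)) \<and>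
          (\<forall>xs\<in>X. \<forall>xs'\<in>X.
             (\<Sum>j<k. \<Sum>C\<in>Y // balrel G H Y. \<pi> j xs' (SOME ys. ys \<in> C) * \<iota> j (SOME ys. ys \<in> C) xs)
             = (if bal G H xs' xs then 1 else 0))))"

definition has_depth :: "('a, 'b) monoid_scheme \<Rightarrow> 'a set \<Rightarrow> nat \<Rightarrow> bool" where
  "has_depth G H d \<longleftrightarrow>
     (d = 1 \<and> bimod_summand G H H H (tuples G 1) {[h] | h. h \<in> H}) \<or>
     (\<exists>n\<ge>1. d = 2 * n \<and> bimod_summand G H (carrier G) H (tuples G (n + 1)) (tuples G n)) \<or>
     (\<exists>n\<ge>1. d = 2 * n + 1 \<and> bimod_summand G H H H (tuples G (n + 1)) (tuples G n))"

definition depth :: "('a, 'b) monoid_scheme \<Rightarrow> 'a set \<Rightarrow> nat" where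
  "depth G H = (LEAST d. d > 0 \<and> has_depth G H d)"

definition left_cosets :: "('a, 'b) monoid_scheme \<Rightarrow> 'a set \<Rightarrow> 'a set set" where
  "left_cosets G H = {a <#\<^bsub>G\<^esub> H | a. a \<in> carrier G}"

definition perm_char :: "('a, 'b) monoid_scheme \<Rightarrow> 'a set \<Rightarrow> 'a \<Rightarrow> nat" where
  "perm_char G H x = card {C \<in> left_cosets G H. x <#\<^bsub>G\<^esub> C = C}"

definition conj_class :: "('a, 'b) monoid_scheme \<Rightarrow> 'a \<Rightarrow> 'a set" where
  "conj_class G x = {g \<otimes>\<^bsub>G\<^esub> x \<otimes>\<^bsub>G\<^esub> inv\<^bsub>G\<^esub> g | g. g \<in> carrier G}"

definition Q :: "('a, 'b) monoid_scheme \<Rightarrow> 'a set \<Rightarrow> nat \<Rightarrow> real" where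
  "Q G H t = (\<Sum>C\<in>{conj_class G x | x. x \<in> carrier G \<and> prime (group.ord G x)}.
      real (card C) * (real (perm_char G H (SOME x. x \<in> C)) / real (card (left_cosets G H))) ^ t)"

definition core_free :: "('a, 'b) monoid_scheme \<Rightarrow> 'a set \<Rightarrow> bool" where
  "core_free G H \<longleftrightarrow> (\<Inter>g\<in>carrier G. (inv\<^bsub>G\<^esub> g <#\<^bsub>G\<^esub> H) #>\<^bsub>G\<^esub> g) = {\<one>\<^bsub>G\<^esub>}"

end

theory Submission
  imports Defs
begin

primrec prodl :: "('a, 'b) monoid_scheme \<Rightarrow> 'a list \<Rightarrow> 'a" where
  "prodl G [] = \<one>\<^bsub>G\<^esub>"
| "prodl G (x # xs) = x \<otimes>\<^bsub>G\<^esub> prodl G xs"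

definition pp :: "('a, 'b) monoid_scheme \<Rightarrow> 'a list \<Rightarrow> nat \<Rightarrow> 'a" where
  "pp G xs i = prodl G (take i xs)"

context group begin

lemma cancel_l [simp]: "x \<in> carrier G \<Longrightarrow> y \<in> carrier G \<Longrightarrow> inv x \<otimes> (x \<otimes> y) = y"
  by (simp add: m_assoc[symmetric])
lemma cancel_l' [simp]: "x \<in> carrier G \<Longrightarrow> y \<in> carrier G \<Longrightarrow> x \<otimes> (inv x \<otimes> y) = y"
  by (simp add: m_assoc[symmetric])

lemmas gs = m_assoc inv_mult_group

lemma prodl_closed [simp]: "set xs \<subseteq> carrier G \<Longrightarrow> prodl G xs \<in> carrier G"
  by (induction xs) auto

lemma prodl_append: "set xs \<subseteq> carrier G \<Longrightarrow> set ys \<subseteq> carrier G \<Longrightarrow>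
   prodl G (xs @ ys) = prodl G xs \<otimes> prodl G ys"
  by (induction xs) (auto simp: m_assoc)

lemma pp_closed [simp]: "set xs \<subseteq> carrier G \<Longrightarrow> pp G xs i \<in> carrier G"
  unfolding pp_def by (meson prodl_closed set_take_subset subset_trans)

lemma pp_0 [simp]: "pp G xs 0 = \<one>" by (simp add: pp_def)

lemma pp_Suc: "set xs \<subseteq> carrier G \<Longrightarrow> i < length xs \<Longrightarrow> pp G xs (Suc i) = pp G xs i \<otimes> xs ! i"
proof -
  assume a: "set xs \<subseteq> carrier G" "i < length xs"
  have "take (Suc i) xs = take i xs @ [xs ! i]" using a by (simp add: take_Suc_conv_app_nth)
  moreover have "xs ! i \<in> carrier G" using a by auto
  moreover have "set (take i xs) \<subseteq> carrier G" using a by (meson set_take_subset subset_trans)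
  ultimately show ?thesis unfolding pp_def by (simp add: prodl_append)
qed

lemma bal_char:
  assumes H: "subgroup H G" and xs: "set xs \<subseteq> carrier G"
  shows "bal G H xs ys \<longleftrightarrow> length ys = length xs \<and> set ys \<subseteq> carrier G \<and>
     (\<forall>i. 0 < i \<and> i < length xs \<longrightarrow> inv (pp G xs i) \<otimes> pp G ys i \<in> H) \<and>
     pp G ys (length xs) = pp G xs (length xs)"
proof
  assume "bal G H xs ys"
  then obtain hs where hs: "length hs = length xs - 1" "set hs \<subseteq> H" and
    ys0: "ys = map (\<lambda>i. inv ((\<lambda>j. if 0 < j \<and> j < length xs then hs ! (j - 1) else \<one>) i) \<otimes> xs ! i \<otimes>
               (\<lambda>j. if 0 < j \<and> j < length xs then hs ! (j - 1) else \<one>) (Suc i)) [0..<length xs]"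
    unfolding bal_def Let_def by blast
  define c where "c = (\<lambda>j. if 0 < j \<and> j < length xs then hs ! (j - 1) else \<one>)"
  have ys: "ys = map (\<lambda>i. inv (c i) \<otimes> xs ! i \<otimes> c (Suc i)) [0..<length xs]"
    using ys0 c_def by simp
  have cH: "c j \<in> H" for j
  proof (cases "0 < j \<and> j < length xs")
    case True
    then have "hs ! (j - 1) \<in> set hs" using hs(1) by auto
    then show ?thesis using True hs(2) c_def by auto
  next
    case False then show ?thesis using c_def subgroup.one_closed[OF H] by auto
  qed
  have cC: "c j \<in> carrier G" for j by (rule subgroup.mem_carrier[OF H cH])
  have xC: "i < length xs \<Longrightarrow> xs ! i \<in> carrier G" for i using xs nth_mem by blast
  have ysn: "i < length xs \<Longrightarrow> ys ! i = inv (c i) \<otimes> xs ! i \<otimes> c (Suc i)" for i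
    using ys by simp
  have ysC: "set ys \<subseteq> carrier G" using ys cC xC by auto
  have len: "length ys = length xs" using ys by simp
  have claim: "i \<le> length xs \<Longrightarrow> pp G ys i = pp G xs i \<otimes> c i" for i
  proof (induction i)
    case 0 then show ?case by (simp add: c_def)
  next
    case (Suc i)
    then have i: "i < length xs" by simp
    have "pp G ys (Suc i) = pp G ys i \<otimes> ys ! i" using pp_Suc[OF ysC] i len by simp
    also have "\<dots> = pp G xs i \<otimes> c i \<otimes> (inv (c i) \<otimes> xs ! i \<otimes> c (Suc i))"
      using Suc i ysn by simp
    also have "\<dots> = pp G xs i \<otimes> xs ! i \<otimes> c (Suc i)"
      using cC xC i xs by (simp add: gs)
    also have "\<dots> = pp G xs (Suc i) \<otimes> c (Suc i)" using pp_Suc[OF xs i] by simp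
    finally show ?case .
  qed
  show "length ys = length xs \<and> set ys \<subseteq> carrier G \<and>
     (\<forall>i. 0 < i \<and> i < length xs \<longrightarrow> inv (pp G xs i) \<otimes> pp G ys i \<in> H) \<and>
     pp G ys (length xs) = pp G xs (length xs)"
  proof (intro conjI allI impI)
    fix i assume "0 < i \<and> i < length xs"
    then show "inv (pp G xs i) \<otimes> pp G ys i \<in> H" using claim[of i] cC cH xs by (simp add: gs)
  next
    show "pp G ys (length xs) = pp G xs (length xs)" using claim[of "length xs"] xs by (simp add: c_def)
  qed (use len ysC in auto)
next
  assume R: "length ys = length xs \<and> set ys \<subseteq> carrier G \<and>
     (\<forall>i. 0 < i \<and> i < length xs \<longrightarrow> inv (pp G xs i) \<otimes> pp G ys i \<in> H) \<and>
     pp G ys (length xs) = pp G xs (length xs)"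
  define n where "n = length xs"
  define hs where "hs = map (\<lambda>i. inv (pp G xs i) \<otimes> pp G ys i) [1..<n]"
  define c where "c = (\<lambda>j. if 0 < j \<and> j < length xs then hs ! (j - 1) else \<one>)"
  have ysC: "set ys \<subseteq> carrier G" using R by simp
  have cj: "j \<le> n \<Longrightarrow> c j = inv (pp G xs j) \<otimes> pp G ys j" for j
  proof -
    assume j: "j \<le> n"
    consider "0 < j \<and> j < n" | "j = 0" | "j = n" using j by linarith
    then show ?thesis
    proof cases
      case 1 then have "j - 1 < n - 1" "Suc (j - 1) = j" by linarith+ with 1 show ?thesis by (simp add: c_def hs_def n_def[symmetric] nth_upt)
    next
      case 2 then show ?thesis by (simp add: c_def)
    next
      case 3 then show ?thesis using R xs by (simp add: c_def n_def)
    qed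
  qed
  have hsH: "set hs \<subseteq> H" using R by (auto simp: hs_def n_def)
  have "ys = map (\<lambda>i. inv (c i) \<otimes> xs ! i \<otimes> c (Suc i)) [0..<length xs]"
  proof (rule nth_equalityI)
    show "length ys = length (map (\<lambda>i. inv (c i) \<otimes> xs ! i \<otimes> c (Suc i)) [0..<length xs])"
      using R by simp
  next
    fix i assume "i < length ys"
    then have i: "i < n" using R n_def by simp
    have xi: "xs ! i \<in> carrier G" "ys ! i \<in> carrier G" using i xs ysC R n_def by auto
    have "inv (c i) \<otimes> xs ! i \<otimes> c (Suc i) =
       inv (inv (pp G xs i) \<otimes> pp G ys i) \<otimes> xs ! i \<otimes> (inv (pp G xs i \<otimes> xs ! i) \<otimes> (pp G ys i \<otimes> ys ! i))"
      using cj[of i] cj[of "Suc i"] i pp_Suc[OF xs, of i] pp_Suc[OF ysC, of i] R n_def by simp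
    also have "\<dots> = ys ! i" using xi xs ysC by (simp add: gs)
    finally show "ys ! i = map (\<lambda>i. inv (c i) \<otimes> xs ! i \<otimes> c (Suc i)) [0..<length xs] ! i"
      using i n_def by simp
  qed
  then show "bal G H xs ys" unfolding bal_def Let_def
    using R hsH by (intro conjI exI[of _ hs]) (auto simp: hs_def n_def c_def)
qed

end

definition act :: "('a, 'b) monoid_scheme \<Rightarrow> 'a \<Rightarrow> 'a \<Rightarrow> 'a list \<Rightarrow> 'a list" where
  "act G a b xs = rmul G (lmul G a xs) b"

context group begin

lemma bal_pp:
  assumes H: "subgroup H G" and xs: "set xs \<subseteq> carrier G" and ys: "set ys \<subseteq> carrier G"
    and len: "length ys = length xs" and eq: "\<And>i. 0 < i \<Longrightarrow> i \<le> length xs \<Longrightarrow> pp G ys i = pp G xs i"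
  shows "bal G H xs ys"
proof -
  have "inv (pp G xs i) \<otimes> pp G ys i \<in> H" if "0 < i" "i < length xs" for i
    using eq[of i] that xs subgroup.one_closed[OF H] by simp
  then show ?thesis using bal_char[OF H xs] len ys eq[of "length xs"]
    by (cases "length xs = 0") auto
qed

lemma bal_refl: "subgroup H G \<Longrightarrow> set xs \<subseteq> carrier G \<Longrightarrow> bal G H xs xs"
  by (rule bal_pp) auto

lemma bal_carrier: "subgroup H G \<Longrightarrow> set xs \<subseteq> carrier G \<Longrightarrow> bal G H xs ys \<Longrightarrow> set ys \<subseteq> carrier G \<and> length ys = length xs"
  using bal_char by blast

lemma bal_sym:
  assumes H: "subgroup H G" and xs: "set xs \<subseteq> carrier G" and b: "bal G H xs ys"
  shows "bal G H ys xs"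
proof -
  have ys: "set ys \<subseteq> carrier G" and R: "length ys = length xs"
     "\<And>i. 0 < i \<and> i < length xs \<longrightarrow> inv (pp G xs i) \<otimes> pp G ys i \<in> H"
     "pp G ys (length xs) = pp G xs (length xs)"
    using b bal_char[OF H xs] by auto
  have "inv (pp G ys i) \<otimes> pp G xs i \<in> H" if "0 < i" "i < length ys" for i
  proof -
    have "inv (inv (pp G xs i) \<otimes> pp G ys i) \<in> H" using R(2)[of i] that R(1) subgroup.m_inv_closed[OF H] by auto
    then show ?thesis using xs ys by (simp add: inv_mult_group)
  qed
  then show ?thesis using bal_char[OF H ys] R xs by auto
qed

lemma bal_trans:
  assumes H: "subgroup H G" and xs: "set xs \<subseteq> carrier G" and b1: "bal G H xs ys" and b2: "bal G H ys zs"
  shows "bal G H xs zs"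
proof -
  have ys: "set ys \<subseteq> carrier G" and R: "length ys = length xs"
     "\<And>i. 0 < i \<and> i < length xs \<longrightarrow> inv (pp G xs i) \<otimes> pp G ys i \<in> H"
     "pp G ys (length xs) = pp G xs (length xs)"
    using b1 bal_char[OF H xs] by auto
  have zs: "set zs \<subseteq> carrier G" and S: "length zs = length ys"
     "\<And>i. 0 < i \<and> i < length ys \<longrightarrow> inv (pp G ys i) \<otimes> pp G zs i \<in> H"
     "pp G zs (length ys) = pp G ys (length ys)"
    using b2 bal_char[OF H ys] by auto
  have "inv (pp G xs i) \<otimes> pp G zs i \<in> H" if "0 < i" "i < length xs" for i
  proof -
    have "(inv (pp G xs i) \<otimes> pp G ys i) \<otimes> (inv (pp G ys i) \<otimes> pp G zs i) \<in> H"
      using R(2)[of i] S(2)[of i] that R(1) subgroup.m_closed[OF H] by auto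
    then show ?thesis using xs ys zs by (simp add: m_assoc)
  qed
  then show ?thesis using bal_char[OF H xs] R S zs by auto
qed

lemma pp_lmul:
  assumes "xs \<noteq> []" "set xs \<subseteq> carrier G" "a \<in> carrier G" "0 < i"
  shows "pp G (lmul G a xs) i = a \<otimes> pp G xs i"
proof -
  obtain x xs' where xs: "xs = x # xs'" using assms(1) by (cases xs) auto
  obtain i' where i: "i = Suc i'" using assms(4) by (cases i) auto
  have "set (take i' xs') \<subseteq> carrier G" using assms(2) xs by (meson set_subset_Cons set_take_subset subset_trans)
  then show ?thesis using xs i assms by (simp add: lmul_def pp_def m_assoc)
qed

lemma lmul_len [simp]: "length (lmul G a xs) = (if xs = [] then 1 else length xs)"
  by (cases xs) (auto simp: lmul_def)

lemma lmul_ne [simp]: "lmul G a xs \<noteq> []"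
  by (simp add: lmul_def)

lemma lmul_carrier: "xs \<noteq> [] \<Longrightarrow> set xs \<subseteq> carrier G \<Longrightarrow> a \<in> carrier G \<Longrightarrow> set (lmul G a xs) \<subseteq> carrier G"
  by (cases xs) (auto simp: lmul_def)

lemma pp_rmul:
  assumes "xs \<noteq> []" "set xs \<subseteq> carrier G" "b \<in> carrier G" "i \<le> length xs"
  shows "pp G (rmul G xs b) i = (if i = length xs then pp G xs i \<otimes> b else pp G xs i)"
proof -
  obtain ys y where xs: "xs = ys @ [y]" using assms(1) by (cases xs rule: rev_cases) auto
  have ys: "set ys \<subseteq> carrier G" "y \<in> carrier G" using assms(2) xs by auto
  show ?thesis
  proof (cases "i = length xs")
    case True
    then show ?thesis using xs ys assms by (simp add: rmul_def pp_def prodl_append m_assoc)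
  next
    case False
    then have "i \<le> length ys" using assms(4) xs by simp
    then show ?thesis using xs False by (simp add: rmul_def pp_def)
  qed
qed

lemma rmul_len [simp]: "xs \<noteq> [] \<Longrightarrow> length (rmul G xs b) = length xs"
  by (simp add: rmul_def)

lemma rmul_carrier: "xs \<noteq> [] \<Longrightarrow> set xs \<subseteq> carrier G \<Longrightarrow> b \<in> carrier G \<Longrightarrow> set (rmul G xs b) \<subseteq> carrier G"
  by (cases xs rule: rev_cases) (auto simp: rmul_def)

lemma act_len [simp]: "xs \<noteq> [] \<Longrightarrow> length (act G a b xs) = length xs"
  by (simp add: act_def)

lemma act_carrier: "xs \<noteq> [] \<Longrightarrow> set xs \<subseteq> carrier G \<Longrightarrow> a \<in> carrier G \<Longrightarrow> b \<in> carrier G \<Longrightarrow> set (act G a b xs) \<subseteq> carrier G"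
  unfolding act_def by (intro rmul_carrier lmul_carrier) (auto simp: lmul_def)

lemma pp_act:
  assumes "xs \<noteq> []" "set xs \<subseteq> carrier G" "a \<in> carrier G" "b \<in> carrier G" "0 < i" "i \<le> length xs"
  shows "pp G (act G a b xs) i = (if i = length xs then a \<otimes> pp G xs i \<otimes> b else a \<otimes> pp G xs i)"
proof -
  have ne: "lmul G a xs \<noteq> []" using assms(1) by (cases xs) (auto simp: lmul_def)
  have c: "set (lmul G a xs) \<subseteq> carrier G" using lmul_carrier assms by blast
  show ?thesis unfolding act_def
    using pp_rmul[OF ne c assms(4), of i] assms pp_lmul[OF assms(1,2,3,5)] by (cases "i = length xs") simp_all
qed

lemma act_ne: "xs \<noteq> [] \<Longrightarrow> act G a b xs \<noteq> []"
  by (simp add: act_def rmul_def)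

lemma bal_act:
  assumes H: "subgroup H G" and xs: "set xs \<subseteq> carrier G" "xs \<noteq> []" and ab: "a \<in> carrier G" "b \<in> carrier G"
    and bl: "bal G H xs ys"
  shows "bal G H (act G a b xs) (act G a b ys)"
proof -
  have ys: "set ys \<subseteq> carrier G" and R: "length ys = length xs"
     "\<And>i. 0 < i \<and> i < length xs \<longrightarrow> inv (pp G xs i) \<otimes> pp G ys i \<in> H"
     "pp G ys (length xs) = pp G xs (length xs)"
    using bl bal_char[OF H xs(1)] by auto
  have yne: "ys \<noteq> []" using R(1) xs(2) by auto
  have c1: "set (act G a b xs) \<subseteq> carrier G" using act_carrier xs ab by blast
  have c2: "set (act G a b ys) \<subseteq> carrier G" using act_carrier ys yne ab by blast
  have "inv (pp G (act G a b xs) i) \<otimes> pp G (act G a b ys) i \<in> H" if "0 < i" "i < length xs" for i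
    using pp_act[OF xs(2,1) ab that(1)] pp_act[OF yne ys ab that(1)] that R xs ys ab
    by (simp add: gs)
  moreover have "pp G (act G a b ys) (length xs) = pp G (act G a b xs) (length xs)"
    using pp_act[OF xs(2,1) ab, of "length xs"] pp_act[OF yne ys ab, of "length xs"] R xs by simp
  ultimately show ?thesis using bal_char[OF H c1] c2 R xs yne by auto
qed

lemma act_act:
  assumes H: "subgroup H G" and xs: "set xs \<subseteq> carrier G" "xs \<noteq> []"
    and ab: "a \<in> carrier G" "b \<in> carrier G" "a' \<in> carrier G" "b' \<in> carrier G"
  shows "bal G H (act G a b (act G a' b' xs)) (act G (a \<otimes> a') (b' \<otimes> b) xs)"
proof -
  have c1: "set (act G a' b' xs) \<subseteq> carrier G" "act G a' b' xs \<noteq> []" using act_carrier act_ne xs ab by auto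
  show ?thesis
  proof (rule bal_pp[OF H])
    show "set (act G a b (act G a' b' xs)) \<subseteq> carrier G" using act_carrier[OF c1(2,1) ab(1,2)] .
    show "set (act G (a \<otimes> a') (b' \<otimes> b) xs) \<subseteq> carrier G" using act_carrier xs ab by simp
    show "length (act G (a \<otimes> a') (b' \<otimes> b) xs) = length (act G a b (act G a' b' xs))" using xs c1 by simp
    fix i assume i: "0 < i" "i \<le> length (act G a b (act G a' b' xs))"
    then have i': "i \<le> length xs" using xs c1 by simp
    show "pp G (act G (a \<otimes> a') (b' \<otimes> b) xs) i = pp G (act G a b (act G a' b' xs)) i"
      using pp_act[OF c1(2,1) ab(1,2) i(1)] pp_act[OF xs(2,1) ab(3,4) i(1) i'] 
        pp_act[OF xs(2,1) _ _ i(1) i', of "a \<otimes> a'" "b' \<otimes> b"] i' xs c1 ab by (cases "i = length xs") (simp_all add: m_assoc)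
  qed
qed

lemma act_one:
  assumes H: "subgroup H G" and xs: "set xs \<subseteq> carrier G" "xs \<noteq> []"
  shows "bal G H (act G \<one> \<one> xs) xs"
proof (rule bal_pp[OF H])
  show "set (act G \<one> \<one> xs) \<subseteq> carrier G" using act_carrier xs by simp
  show "set xs \<subseteq> carrier G" using xs by simp
  show "length xs = length (act G \<one> \<one> xs)" using xs by simp
  fix i assume "0 < i" "i \<le> length (act G \<one> \<one> xs)"
  then show "pp G xs i = pp G (act G \<one> \<one> xs) i" using pp_act[OF xs(2,1), of \<one> \<one> i] xs by simp
qed

end

definition Rl :: "('a, 'b) monoid_scheme \<Rightarrow> 'a set \<Rightarrow> 'a list \<Rightarrow> 'a list \<Rightarrow> 'a list \<Rightarrow> 'a list \<Rightarrow> bool" where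
  "Rl G H y0 s zs xs \<longleftrightarrow> (\<exists>h1\<in>H. \<exists>h2\<in>H. bal G H (act G h1 h2 s) xs \<and> bal G H (act G h1 h2 y0) zs)"

context group begin

lemma tuplesD: "xs \<in> tuples G p \<Longrightarrow> 1 \<le> p \<Longrightarrow> xs \<noteq> [] \<and> set xs \<subseteq> carrier G \<and> length xs = p"
  by (auto simp: tuples_def)

lemma act_tuples: "xs \<in> tuples G p \<Longrightarrow> 1 \<le> p \<Longrightarrow> a \<in> carrier G \<Longrightarrow> b \<in> carrier G \<Longrightarrow> act G a b xs \<in> tuples G p"
proof -
  assume a: "xs \<in> tuples G p" "1 \<le> p" "a \<in> carrier G" "b \<in> carrier G"
  then have "xs \<noteq> []" "set xs \<subseteq> carrier G" "length xs = p" using tuplesD by blast+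
  then show ?thesis unfolding tuples_def using act_carrier[of xs a b] a(3,4) act_len[of xs] by simp
qed

lemma equiv_balrel: assumes H: "subgroup H G" shows "equiv (tuples G p) (balrel G H (tuples G p))"
proof (rule equivI)
  show "refl_on (tuples G p) (balrel G H (tuples G p))"
    unfolding refl_on_def balrel_def using bal_refl[OF H] by (auto simp: tuples_def)
  show "sym (balrel G H (tuples G p))"
    unfolding sym_def balrel_def using bal_sym[OF H] by (auto simp: tuples_def)
  show "trans (balrel G H (tuples G p))"
    unfolding trans_def balrel_def using bal_trans[OF H] by (auto simp: tuples_def)
  show "balrel G H (tuples G p) \<subseteq> tuples G p \<times> tuples G p" by (auto simp: balrel_def)
qed

lemma act_cancel:
  assumes H: "subgroup H G" and xs: "set xs \<subseteq> carrier G" "xs \<noteq> []" and ab: "a \<in> carrier G" "b \<in> carrier G"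
  shows "bal G H (act G (inv a) (inv b) (act G a b xs)) xs" "bal G H (act G a b (act G (inv a) (inv b) xs)) xs"
proof -
  have "bal G H (act G (inv a) (inv b) (act G a b xs)) (act G (inv a \<otimes> a) (b \<otimes> inv b) xs)"
    using act_act[OF H xs, of "inv a" "inv b" a b] ab by simp
  moreover have "bal G H (act G \<one> \<one> xs) xs" using act_one[OF H xs] .
  moreover have "set (act G (inv a) (inv b) (act G a b xs)) \<subseteq> carrier G"
    using act_carrier act_ne xs ab by simp
  ultimately show "bal G H (act G (inv a) (inv b) (act G a b xs)) xs"
    using bal_trans[OF H] ab by simp
  have "bal G H (act G a b (act G (inv a) (inv b) xs)) (act G (a \<otimes> inv a) (inv b \<otimes> b) xs)"
    using act_act[OF H xs, of a b "inv a" "inv b"] ab by simp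
  moreover have "set (act G a b (act G (inv a) (inv b) xs)) \<subseteq> carrier G"
    using act_carrier act_ne xs ab by simp
  ultimately show "bal G H (act G a b (act G (inv a) (inv b) xs)) xs"
    using bal_trans[OF H] ab \<open>bal G H (act G \<one> \<one> xs) xs\<close> by simp
qed

lemma Rl_cong:
  assumes H: "subgroup H G" and s: "s \<in> tuples G p" "1 \<le> p" and y0: "y0 \<in> tuples G q" "1 \<le> q"
    and R: "Rl G H y0 s zs xs" and b1: "bal G H zs zs'" and b2: "bal G H xs xs'"
  shows "Rl G H y0 s zs' xs'"
proof -
  obtain h1 h2 where h: "h1 \<in> H" "h2 \<in> H" "bal G H (act G h1 h2 s) xs" "bal G H (act G h1 h2 y0) zs"
    using R unfolding Rl_def by blast
  have hc: "h1 \<in> carrier G" "h2 \<in> carrier G" using h by (auto intro: subgroup.mem_carrier[OF H])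
  have c1: "set (act G h1 h2 s) \<subseteq> carrier G" using tuplesD[OF act_tuples[OF s hc] s(2)] by blast
  have c2: "set (act G h1 h2 y0) \<subseteq> carrier G" using tuplesD[OF act_tuples[OF y0 hc] y0(2)] by blast
  show ?thesis unfolding Rl_def using h bal_trans[OF H c1 h(3) b2] bal_trans[OF H c2 h(4) b1] by blast
qed

lemma Rl_act:
  assumes H: "subgroup H G" and s: "s \<in> tuples G p" "1 \<le> p" and y0: "y0 \<in> tuples G q" "1 \<le> q"
    and R: "Rl G H y0 s zs xs" and ab: "a \<in> H" "b \<in> H"
  shows "Rl G H y0 s (act G a b zs) (act G a b xs)"
proof -
  obtain h1 h2 where h: "h1 \<in> H" "h2 \<in> H" "bal G H (act G h1 h2 s) xs" "bal G H (act G h1 h2 y0) zs"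
    using R unfolding Rl_def by blast
  have hc: "h1 \<in> carrier G" "h2 \<in> carrier G" "a \<in> carrier G" "b \<in> carrier G"
    using h ab by (auto intro: subgroup.mem_carrier[OF H])
  have sc: "set s \<subseteq> carrier G" "s \<noteq> []" using tuplesD[OF s] by blast+
  have yc: "set y0 \<subseteq> carrier G" "y0 \<noteq> []" using tuplesD[OF y0] by blast+
  have c1: "set (act G h1 h2 s) \<subseteq> carrier G" "act G h1 h2 s \<noteq> []" using tuplesD[OF act_tuples[OF s hc(1,2)] s(2)] by blast+
  have c2: "set (act G h1 h2 y0) \<subseteq> carrier G" "act G h1 h2 y0 \<noteq> []" using tuplesD[OF act_tuples[OF y0 hc(1,2)] y0(2)] by blast+
  have c3: "set (act G (a \<otimes> h1) (h2 \<otimes> b) s) \<subseteq> carrier G" using act_carrier sc hc by simp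
  have c4: "set (act G (a \<otimes> h1) (h2 \<otimes> b) y0) \<subseteq> carrier G" using act_carrier yc hc by simp
  have e1: "bal G H (act G (a \<otimes> h1) (h2 \<otimes> b) s) (act G a b xs)"
    using bal_trans[OF H c3 bal_sym[OF H _ act_act[OF H sc hc(3,4,1,2)]] bal_act[OF H c1 hc(3,4) h(3)]]
      act_carrier[OF c1(2,1) hc(3,4)] by blast
  have e2: "bal G H (act G (a \<otimes> h1) (h2 \<otimes> b) y0) (act G a b zs)"
    using bal_trans[OF H c4 bal_sym[OF H _ act_act[OF H yc hc(3,4,1,2)]] bal_act[OF H c2 hc(3,4) h(4)]]
      act_carrier[OF c2(2,1) hc(3,4)] by blast
  have "a \<otimes> h1 \<in> H" "h2 \<otimes> b \<in> H" using h ab subgroup.m_closed[OF H] by auto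
  then show ?thesis unfolding Rl_def using e1 e2 by blast
qed

lemma Rl_act_iff:
  assumes H: "subgroup H G" and s: "s \<in> tuples G p" "1 \<le> p" and y0: "y0 \<in> tuples G q" "1 \<le> q"
    and zs: "zs \<in> tuples G q" and xs: "xs \<in> tuples G p" and ab: "a \<in> H" "b \<in> H"
  shows "Rl G H y0 s (act G a b zs) (act G a b xs) \<longleftrightarrow> Rl G H y0 s zs xs"
proof
  assume "Rl G H y0 s zs xs" then show "Rl G H y0 s (act G a b zs) (act G a b xs)"
    using Rl_act[OF H s y0 _ ab] by blast
next
  assume R: "Rl G H y0 s (act G a b zs) (act G a b xs)"
  have ic: "inv a \<in> H" "inv b \<in> H" using ab subgroup.m_inv_closed[OF H] by auto
  have hc: "a \<in> carrier G" "b \<in> carrier G" using ab by (auto intro: subgroup.mem_carrier[OF H])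
  have R2: "Rl G H y0 s (act G (inv a) (inv b) (act G a b zs)) (act G (inv a) (inv b) (act G a b xs))"
    using Rl_act[OF H s y0 R ic] .
  show "Rl G H y0 s zs xs"
    using Rl_cong[OF H s y0 R2 act_cancel(1)[OF H _ _ hc] act_cancel(1)[OF H _ _ hc]] tuplesD[OF zs y0(2)] tuplesD[OF xs s(2)]
    by blast
qed

lemma Rl_unique:
  assumes H: "subgroup H G" and s: "s \<in> tuples G p" "1 \<le> p" and y0: "y0 \<in> tuples G q" "1 \<le> q"
    and free: "\<And>h1 h2 h1' h2'. h1 \<in> H \<Longrightarrow> h2 \<in> H \<Longrightarrow> h1' \<in> H \<Longrightarrow> h2' \<in> H \<Longrightarrow>
       bal G H (act G h1 h2 y0) (act G h1' h2' y0) \<Longrightarrow> h1 = h1' \<and> h2 = h2'"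
    and xs: "xs \<in> tuples G p" and zs: "zs \<in> tuples G q"
    and R1: "Rl G H y0 s zs xs'" and R2: "Rl G H y0 s zs xs"
  shows "bal G H xs' xs"
proof -
  obtain h1 h2 where h: "h1 \<in> H" "h2 \<in> H" "bal G H (act G h1 h2 s) xs'" "bal G H (act G h1 h2 y0) zs"
    using R1 unfolding Rl_def by blast
  obtain h1' h2' where h': "h1' \<in> H" "h2' \<in> H" "bal G H (act G h1' h2' s) xs" "bal G H (act G h1' h2' y0) zs"
    using R2 unfolding Rl_def by blast
  have hc: "h1 \<in> carrier G" "h2 \<in> carrier G" "h1' \<in> carrier G" "h2' \<in> carrier G"
    using h h' by (auto intro: subgroup.mem_carrier[OF H])
  have c2: "set (act G h1 h2 y0) \<subseteq> carrier G" using tuplesD[OF act_tuples[OF y0 hc(1,2)] y0(2)] by blast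
  have c2': "set (act G h1' h2' y0) \<subseteq> carrier G" using tuplesD[OF act_tuples[OF y0 hc(3,4)] y0(2)] by blast
  have "bal G H (act G h1 h2 y0) (act G h1' h2' y0)"
    using bal_trans[OF H c2 h(4) bal_sym[OF H c2' h'(4)]] .
  then have eq: "h1 = h1'" "h2 = h2'" using free h h' by blast+
  have c1: "set (act G h1 h2 s) \<subseteq> carrier G" using tuplesD[OF act_tuples[OF s hc(1,2)] s(2)] by blast
  have "bal G H xs' (act G h1 h2 s)" using bal_sym[OF H c1 h(3)] .
  moreover have "set xs' \<subseteq> carrier G" using bal_carrier[OF H c1 h(3)] by simp
  ultimately show ?thesis using bal_trans[OF H] h'(3) eq by blast
qed

end

context group begin

lemma finite_tuples: "finite (carrier G) \<Longrightarrow> finite (tuples G p)"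
proof -
  assume f: "finite (carrier G)"
  have "tuples G p = {xs. set xs \<subseteq> carrier G \<and> length xs = p}" unfolding tuples_def by auto
  then show ?thesis using finite_lists_length_eq[OF f] by simp
qed

lemma summand_free:
  assumes H: "subgroup H G" and fin: "finite (carrier G)" and p: "1 \<le> p" and q: "1 \<le> q"
    and y0: "y0 \<in> tuples G q"
    and free: "\<And>h1 h2 h1' h2'. h1 \<in> H \<Longrightarrow> h2 \<in> H \<Longrightarrow> h1' \<in> H \<Longrightarrow> h2' \<in> H \<Longrightarrow>
       bal G H (act G h1 h2 y0) (act G h1' h2' y0) \<Longrightarrow> h1 = h1' \<and> h2 = h2'"
  shows "bimod_summand G H H H (tuples G p) (tuples G q)"
proof -
  define X where "X = tuples G p"
  define Y where "Y = tuples G q"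
  define rX where "rX = balrel G H X"
  define rY where "rY = balrel G H Y"
  have eqX: "equiv X rX" using equiv_balrel[OF H] by (simp add: X_def rX_def)
  have eqY: "equiv Y rY" using equiv_balrel[OF H] by (simp add: Y_def rY_def)
  have finX: "finite X" using finite_tuples[OF fin] by (simp add: X_def)
  have finY: "finite Y" using finite_tuples[OF fin] by (simp add: Y_def)
  define Xq where "Xq = X // rX"
  define Yq where "Yq = Y // rY"
  have finXq: "finite Xq" unfolding Xq_def using finite_quotient[OF finX equiv_type[OF eqX]] by simp
  have finYq: "finite Yq" unfolding Yq_def using finite_quotient[OF finY equiv_type[OF eqY]] by simp
  define k where "k = card Xq"
  obtain e where e: "bij_betw e {0..<k} Xq" using ex_bij_betw_nat_finite[OF finXq] unfolding k_def by blast
  have Xne: "replicate p \<one> \<in> X" unfolding X_def tuples_def by auto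
  have "rX``{replicate p \<one>} \<in> Xq" unfolding Xq_def using quotientI[OF Xne] .
  then have "Xq \<noteq> {}" by blast
  then have k1: "1 \<le> k" unfolding k_def using finXq by (simp add: card_gt_0_iff Suc_le_eq)
  define s where "s = (\<lambda>j. SOME xs. xs \<in> e j)"
  have ejX: "\<And>j. j < k \<Longrightarrow> e j \<in> Xq" using bij_betwE[OF e] by simp
  have sj: "\<And>j. j < k \<Longrightarrow> s j \<in> e j"
  proof -
    fix j assume "j < k"
    then have "e j \<noteq> {}" using in_quotient_imp_non_empty[OF eqX] ejX[OF \<open>j < k\<close>] unfolding Xq_def by blast
    then show "s j \<in> e j" unfolding s_def by (simp add: some_in_eq)
  qed
  have sX: "\<And>j. j < k \<Longrightarrow> s j \<in> X" using in_quotient_imp_subset[OF eqX] ejX sj unfolding Xq_def by blast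
  have sT: "\<And>j. j < k \<Longrightarrow> s j \<in> tuples G p" using sX unfolding X_def by simp
  define r where "r = (\<lambda>C::'a list set. SOME ys. ys \<in> C)"
  have rC: "\<And>C. C \<in> Yq \<Longrightarrow> r C \<in> C" 
  proof -
    fix C assume "C \<in> Yq"
    then have "C \<noteq> {}" using in_quotient_imp_non_empty[OF eqY] \<open>C \<in> Yq\<close> unfolding Yq_def by blast
    then show "r C \<in> C" unfolding r_def by (simp add: some_in_eq)
  qed
  have rY': "\<And>C. C \<in> Yq \<Longrightarrow> r C \<in> Y" using rC in_quotient_imp_subset[OF eqY] unfolding Yq_def by blast
  have classeq: "\<And>C. C \<in> Yq \<Longrightarrow> C = rY``{r C}"
  proof -
    fix C assume C: "C \<in> Yq"
    then obtain y where y: "C = rY``{y}" "y \<in> Y" unfolding Yq_def by (rule quotientE)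
    then have "(y, r C) \<in> rY" using rC[OF C] by simp
    then have "rY``{y} = rY``{r C}" by (rule equiv_class_eq[OF eqY])
    with y(1) show "C = rY``{r C}" by (rule trans)
  qed
  define N where "N = card H"
  have finH: "finite H" using fin subgroup.subset[OF H] finite_subset by blast
  have N0: "N > 0" unfolding N_def using finH subgroup.one_closed[OF H] card_gt_0_iff by blast
  define \<iota> where "\<iota> = (\<lambda>j zs xs. if Rl G H y0 (s j) zs xs then (1::complex) else 0)"
  define \<pi> where "\<pi> = (\<lambda>j xs zs. if Rl G H y0 (s j) zs xs then 1 / (of_nat N)^2 else (0::complex))"
  have Rl_iff: "\<And>j zs zs' xs xs'. j < k \<Longrightarrow> zs \<in> Y \<Longrightarrow> zs' \<in> Y \<Longrightarrow> xs \<in> X \<Longrightarrow> xs' \<in> X \<Longrightarrow>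
     bal G H zs zs' \<Longrightarrow> bal G H xs xs' \<Longrightarrow> Rl G H y0 (s j) zs xs \<longleftrightarrow> Rl G H y0 (s j) zs' xs'"
  proof -
    fix j zs zs' xs xs' assume a: "j < k" "zs \<in> Y" "zs' \<in> Y" "xs \<in> X" "xs' \<in> X"
      "bal G H zs zs'" "bal G H xs xs'"
    have b1: "bal G H zs' zs" using bal_sym[OF H _ a(6)] tuplesD[of zs q] a(2) q Y_def by blast
    have b2: "bal G H xs' xs" using bal_sym[OF H _ a(7)] tuplesD[of xs p] a(4) p X_def by blast
    show "Rl G H y0 (s j) zs xs \<longleftrightarrow> Rl G H y0 (s j) zs' xs'"
      using Rl_cong[OF H sT[OF a(1)] p y0 q _ a(6) a(7)] Rl_cong[OF H sT[OF a(1)] p y0 q _ b1 b2] by blast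
  qed
  have wd: "\<forall>j<k. well_def_mat G H Y X (\<iota> j) \<and> equiv_mat G H H Y X (\<iota> j)
                \<and> well_def_mat G H X Y (\<pi> j) \<and> equiv_mat G H H X Y (\<pi> j)"
  proof (intro allI impI conjI)
    fix j assume j: "j < k"
    show "well_def_mat G H Y X (\<iota> j)" unfolding well_def_mat_def \<iota>_def using Rl_iff[OF j] by auto
    show "well_def_mat G H X Y (\<pi> j)" unfolding well_def_mat_def \<pi>_def using Rl_iff[OF j] by auto
    show "equiv_mat G H H Y X (\<iota> j)" unfolding equiv_mat_def \<iota>_def act_def[symmetric]
      using Rl_act_iff[OF H sT[OF j] p y0 q] X_def Y_def by auto
    show "equiv_mat G H H X Y (\<pi> j)" unfolding equiv_mat_def \<pi>_def act_def[symmetric]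
      using Rl_act_iff[OF H sT[OF j] p y0 q] X_def Y_def by auto
  qed
  define Pj where "Pj = (\<lambda>j xs. {pr \<in> H \<times> H. bal G H (act G (fst pr) (snd pr) (s j)) xs})"
  have bij: "\<And>j xs. j < k \<Longrightarrow> xs \<in> X \<Longrightarrow>
     bij_betw (\<lambda>pr. rY``{act G (fst pr) (snd pr) y0}) (Pj j xs) {C \<in> Yq. Rl G H y0 (s j) (r C) xs}"
  proof -
    fix j xs assume j: "j < k" and xs: "xs \<in> X"
    have actY: "\<And>a b. a \<in> H \<Longrightarrow> b \<in> H \<Longrightarrow> act G a b y0 \<in> Y"
      using act_tuples[OF y0 q] subgroup.mem_carrier[OF H] Y_def by blast
    show "bij_betw (\<lambda>pr. rY``{act G (fst pr) (snd pr) y0}) (Pj j xs) {C \<in> Yq. Rl G H y0 (s j) (r C) xs}"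
    proof (rule bij_betw_imageI)
      show "inj_on (\<lambda>pr. rY``{act G (fst pr) (snd pr) y0}) (Pj j xs)"
      proof (rule inj_onI)
        fix pr pr' assume a: "pr \<in> Pj j xs" "pr' \<in> Pj j xs"
          and eq: "rY``{act G (fst pr) (snd pr) y0} = rY``{act G (fst pr') (snd pr') y0}"
        have pr: "fst pr \<in> H" "snd pr \<in> H" "fst pr' \<in> H" "snd pr' \<in> H"
          using a unfolding Pj_def by auto
        have "(act G (fst pr) (snd pr) y0, act G (fst pr') (snd pr') y0) \<in> rY"
          using eq_equiv_class_iff[OF eqY actY[OF pr(1,2)] actY[OF pr(3,4)]] eq by blast
        then have "bal G H (act G (fst pr) (snd pr) y0) (act G (fst pr') (snd pr') y0)"
          unfolding rY_def balrel_def by simp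
        then have "fst pr = fst pr' \<and> snd pr = snd pr'" using free[OF pr] by blast
        then show "pr = pr'" by (simp add: prod_eq_iff)
      qed
      show "(\<lambda>pr. rY``{act G (fst pr) (snd pr) y0}) ` Pj j xs = {C \<in> Yq. Rl G H y0 (s j) (r C) xs}"
      proof
        show "(\<lambda>pr. rY``{act G (fst pr) (snd pr) y0}) ` Pj j xs \<subseteq> {C \<in> Yq. Rl G H y0 (s j) (r C) xs}"
        proof
          fix C assume "C \<in> (\<lambda>pr. rY``{act G (fst pr) (snd pr) y0}) ` Pj j xs"
          then obtain pr where pr: "pr \<in> Pj j xs" and C: "C = rY``{act G (fst pr) (snd pr) y0}" by blast
          define h1 where "h1 = fst pr"
          define h2 where "h2 = snd pr"
          have h: "h1 \<in> H" "h2 \<in> H" "bal G H (act G h1 h2 (s j)) xs" using pr unfolding Pj_def h1_def h2_def by auto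
          have C: "C = rY``{act G h1 h2 y0}" using C unfolding h1_def h2_def .
          have CY: "C \<in> Yq" unfolding C Yq_def using quotientI[OF actY[OF h(1,2)]] .
          have "r C \<in> rY``{act G h1 h2 y0}" using rC[OF CY] unfolding C[symmetric] .
          then have "bal G H (act G h1 h2 y0) (r C)" unfolding rY_def balrel_def by simp
          then have "Rl G H y0 (s j) (r C) xs" unfolding Rl_def using h by blast
          then show "C \<in> {C \<in> Yq. Rl G H y0 (s j) (r C) xs}" using CY by simp
        qed
      next
        show "{C \<in> Yq. Rl G H y0 (s j) (r C) xs} \<subseteq> (\<lambda>pr. rY``{act G (fst pr) (snd pr) y0}) ` Pj j xs"
        proof
          fix C assume "C \<in> {C \<in> Yq. Rl G H y0 (s j) (r C) xs}"
          then have CY: "C \<in> Yq" and R: "Rl G H y0 (s j) (r C) xs" by auto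
          obtain h1 h2 where h: "h1 \<in> H" "h2 \<in> H" "bal G H (act G h1 h2 (s j)) xs"
            "bal G H (act G h1 h2 y0) (r C)" using R unfolding Rl_def by blast
          have "(act G h1 h2 y0, r C) \<in> rY" unfolding rY_def balrel_def using h actY rY'[OF CY] by simp
          then have "rY``{act G h1 h2 y0} = rY``{r C}" by (rule equiv_class_eq[OF eqY])
          then have "rY``{act G h1 h2 y0} = C" using classeq[OF CY] by (rule trans[OF _ sym])
          moreover have "(h1, h2) \<in> Pj j xs" unfolding Pj_def using h by simp
          ultimately show "C \<in> (\<lambda>pr. rY``{act G (fst pr) (snd pr) y0}) ` Pj j xs"
            by (metis (no_types, lifting) fst_conv image_eqI snd_conv)
        qed
      qed
    qed
  qed
  have key1: "\<And>j xs xs'. j < k \<Longrightarrow> xs \<in> X \<Longrightarrow> xs' \<in> X \<Longrightarrow>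
     (\<Sum>C\<in>Yq. \<pi> j xs' (r C) * \<iota> j (r C) xs) =
     (if bal G H xs' xs then of_nat (card (Pj j xs)) / (of_nat N)^2 else 0)"
  proof -
    fix j xs xs' assume j: "j < k" and xs: "xs \<in> X" and xs': "xs' \<in> X"
    have "(\<Sum>C\<in>Yq. \<pi> j xs' (r C) * \<iota> j (r C) xs) =
        (\<Sum>C\<in>{C \<in> Yq. Rl G H y0 (s j) (r C) xs' \<and> Rl G H y0 (s j) (r C) xs}. 1 / (of_nat N)^2)"
      unfolding sum.inter_filter[OF finYq] by (rule sum.cong) (auto simp: \<pi>_def \<iota>_def)
    also have "\<dots> = of_nat (card {C \<in> Yq. Rl G H y0 (s j) (r C) xs' \<and> Rl G H y0 (s j) (r C) xs}) / (of_nat N)^2"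
      by simp
    also have "\<dots> = (if bal G H xs' xs then of_nat (card (Pj j xs)) / (of_nat N)^2 else 0)"
    proof (cases "bal G H xs' xs")
      case True
      have "{C \<in> Yq. Rl G H y0 (s j) (r C) xs' \<and> Rl G H y0 (s j) (r C) xs} = {C \<in> Yq. Rl G H y0 (s j) (r C) xs}"
      proof -
        have "Rl G H y0 (s j) (r C) xs' \<longleftrightarrow> Rl G H y0 (s j) (r C) xs" if "C \<in> Yq" for C
          using Rl_iff[OF j rY'[OF that] rY'[OF that] xs' xs _ True] bal_refl[OF H] rY'[OF that]
            tuplesD[of "r C" q] q Y_def by blast
        then show ?thesis by blast
      qed
      then show ?thesis using True bij_betw_same_card[OF bij[OF j xs]] by simp
    next
      case False
      have E: "{C \<in> Yq. Rl G H y0 (s j) (r C) xs' \<and> Rl G H y0 (s j) (r C) xs} = {}"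
      proof -
        have "\<not> (Rl G H y0 (s j) (r C) xs' \<and> Rl G H y0 (s j) (r C) xs)" if "C \<in> Yq" for C
          using Rl_unique[OF H sT[OF j] p y0 q free _ _ , of xs "r C" xs'] xs rY'[OF that] False X_def Y_def
          by blast
        then show ?thesis by blast
      qed
      show ?thesis unfolding E using False by simp
    qed
    finally show "(\<Sum>C\<in>Yq. \<pi> j xs' (r C) * \<iota> j (r C) xs) =
     (if bal G H xs' xs then of_nat (card (Pj j xs)) / (of_nat N)^2 else 0)" .
  qed
  have key2: "\<And>xs. xs \<in> X \<Longrightarrow> (\<Sum>j<k. card (Pj j xs)) = N * N"
  proof -
    fix xs assume xs: "xs \<in> X"
    have xsc: "set xs \<subseteq> carrier G" "xs \<noteq> []" using tuplesD[of xs p] xs X_def p by auto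
    have finHH: "finite (H \<times> H)" using finH by simp
    have one: "(\<Sum>j<k. if bal G H (act G (fst pr) (snd pr) (s j)) xs then 1 else 0) = (1::nat)"
      if pr: "pr \<in> H \<times> H" for pr
    proof -
      obtain h1 h2 where h: "pr = (h1, h2)" "h1 \<in> H" "h2 \<in> H" using pr by auto
      have hc: "h1 \<in> carrier G" "h2 \<in> carrier G" using h subgroup.mem_carrier[OF H] by auto
      define C0 where "C0 = rX``{act G (inv h1) (inv h2) xs}"
      have ax: "act G (inv h1) (inv h2) xs \<in> X" using act_tuples[of xs p] xs X_def p hc by simp
      have C0: "C0 \<in> Xq" unfolding C0_def Xq_def using quotientI[OF ax] .
      have iff: "bal G H (act G h1 h2 (s j)) xs \<longleftrightarrow> e j = C0" if j: "j < k" for j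
      proof
        assume b: "bal G H (act G h1 h2 (s j)) xs"
        have sc: "set (s j) \<subseteq> carrier G" "s j \<noteq> []" using tuplesD[OF sT[OF j] p] by auto
        have ac: "set (act G h1 h2 (s j)) \<subseteq> carrier G" "act G h1 h2 (s j) \<noteq> []"
          using tuplesD[OF act_tuples[OF sT[OF j] p hc] p] by auto
        have "bal G H (act G (inv h1) (inv h2) (act G h1 h2 (s j))) (act G (inv h1) (inv h2) xs)"
          using bal_act[OF H ac, of "inv h1" "inv h2"] hc b by simp
        then have "bal G H (s j) (act G (inv h1) (inv h2) xs)"
          using bal_trans[OF H sc(1) bal_sym[OF H _ act_cancel(1)[OF H sc hc]]] act_carrier[OF ac(2,1)] hc by simp
        then have "(s j, act G (inv h1) (inv h2) xs) \<in> rX" unfolding rX_def balrel_def using sX[OF j] ax by simp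
        then have "rX``{s j} = C0" unfolding C0_def using equiv_class_eq[OF eqX] by simp
        moreover have "e j = rX``{s j}"
        proof -
          obtain y where y: "e j = rX``{y}" "y \<in> X" using ejX[OF j] unfolding Xq_def by (rule quotientE)
          then have "(y, s j) \<in> rX" using sj[OF j] by simp
          then show ?thesis using y equiv_class_eq[OF eqX] by simp
        qed
        ultimately show "e j = C0" by simp
      next
        assume "e j = C0"
        then have "s j \<in> C0" using sj[OF j] by simp
        then have b: "bal G H (act G (inv h1) (inv h2) xs) (s j)" unfolding C0_def rX_def balrel_def by simp
        have axc: "set (act G (inv h1) (inv h2) xs) \<subseteq> carrier G" "act G (inv h1) (inv h2) xs \<noteq> []"
          using act_carrier act_ne xsc hc by auto
        have b2: "bal G H (act G h1 h2 (act G (inv h1) (inv h2) xs)) (act G h1 h2 (s j))"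
          using bal_act[OF H axc hc b] .
        have c3: "set (act G h1 h2 (act G (inv h1) (inv h2) xs)) \<subseteq> carrier G"
          using act_carrier axc hc by simp
        show "bal G H (act G h1 h2 (s j)) xs"
          using bal_trans[OF H _ bal_sym[OF H c3 b2] act_cancel(2)[OF H xsc hc]] act_carrier tuplesD[OF sT[OF j] p] hc
          by simp
      qed
      have "(\<Sum>j<k. if bal G H (act G (fst pr) (snd pr) (s j)) xs then 1 else 0) = (\<Sum>j\<in>{0..<k}. if e j = C0 then 1 else (0::nat))"
        using iff h by (simp add: atLeast0LessThan)
      also have "\<dots> = (\<Sum>C\<in>Xq. if C = C0 then 1 else 0)"
        using sum.reindex_bij_betw[OF e, of "\<lambda>C. if C = C0 then 1 else (0::nat)"] by simp
      also have "\<dots> = 1" using C0 finXq by simp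
      finally show ?thesis .
    qed
    have "(\<Sum>j<k. card (Pj j xs)) = (\<Sum>j<k. \<Sum>pr\<in>H \<times> H. if bal G H (act G (fst pr) (snd pr) (s j)) xs then 1 else 0)"
      unfolding Pj_def by (simp add: sum.inter_filter[OF finHH, symmetric])
    also have "\<dots> = (\<Sum>pr\<in>H \<times> H. \<Sum>j<k. if bal G H (act G (fst pr) (snd pr) (s j)) xs then 1 else 0)"
      by (rule sum.swap)
    also have "\<dots> = (\<Sum>pr\<in>H \<times> H. 1)" using one by simp
    also have "\<dots> = N * N" by (simp add: N_def card_cartesian_product)
    finally show "(\<Sum>j<k. card (Pj j xs)) = N * N" .
  qed
  have ident: "\<forall>xs\<in>X. \<forall>xs'\<in>X.
       (\<Sum>j<k. \<Sum>C\<in>Y // balrel G H Y. \<pi> j xs' (SOME ys. ys \<in> C) * \<iota> j (SOME ys. ys \<in> C) xs)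
       = (if bal G H xs' xs then 1 else 0)"
  proof (intro ballI)
    fix xs xs' assume xs: "xs \<in> X" and xs': "xs' \<in> X"
    have "(\<Sum>j<k. \<Sum>C\<in>Y // balrel G H Y. \<pi> j xs' (SOME ys. ys \<in> C) * \<iota> j (SOME ys. ys \<in> C) xs)
        = (\<Sum>j<k. \<Sum>C\<in>Yq. \<pi> j xs' (r C) * \<iota> j (r C) xs)" by (simp add: Yq_def rY_def r_def)
    also have "\<dots> = (\<Sum>j<k. if bal G H xs' xs then of_nat (card (Pj j xs)) / (of_nat N)^2 else 0)"
      using key1 xs xs' by simp
    also have "\<dots> = (if bal G H xs' xs then of_nat (\<Sum>j<k. card (Pj j xs)) / (of_nat N)^2 else 0)"
      by (simp add: sum_divide_distrib)
    also have "\<dots> = (if bal G H xs' xs then 1 else 0)"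
      using key2[OF xs] N0 by (simp add: power2_eq_square)
    finally show "(\<Sum>j<k. \<Sum>C\<in>Y // balrel G H Y. \<pi> j xs' (SOME ys. ys \<in> C) * \<iota> j (SOME ys. ys \<in> C) xs)
       = (if bal G H xs' xs then 1 else 0)" .
  qed
  have "bimod_summand G H H H X Y"
    unfolding bimod_summand_def using k1 wd ident by blast
  then show ?thesis by (simp add: X_def Y_def)
qed

end

context group begin

lemma bal_single: "y \<in> carrier G \<Longrightarrow> bal G H [y] zs \<longleftrightarrow> zs = [y]"
  unfolding bal_def Let_def by auto

lemma lmul_lmul: "xs \<noteq> [] \<Longrightarrow> hd xs \<in> carrier G \<Longrightarrow> a \<in> carrier G \<Longrightarrow> b \<in> carrier G \<Longrightarrow>
   lmul G a (lmul G b xs) = lmul G (a \<otimes> b) xs"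
  by (cases xs) (auto simp: lmul_def m_assoc)

lemma rmul_one: "xs \<noteq> [] \<Longrightarrow> last xs \<in> carrier G \<Longrightarrow> rmul G xs \<one> = xs"
  by (simp add: rmul_def)

lemma rmul_one': "xs \<noteq> [] \<Longrightarrow> set xs \<subseteq> carrier G \<Longrightarrow> rmul G xs \<one> = xs"
proof -
  assume a: "xs \<noteq> []" "set xs \<subseteq> carrier G"
  then have "last xs \<in> carrier G" using last_in_set by blast
  then show ?thesis using rmul_one a(1) by blast
qed

lemma lmul_one: "xs \<noteq> [] \<Longrightarrow> hd xs \<in> carrier G \<Longrightarrow> lmul G \<one> xs = xs"
  by (cases xs) (auto simp: lmul_def)

lemma rmul_rmul: "xs \<noteq> [] \<Longrightarrow> last xs \<in> carrier G \<Longrightarrow> a \<in> carrier G \<Longrightarrow> b \<in> carrier G \<Longrightarrow>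
   rmul G (rmul G xs a) b = rmul G xs (a \<otimes> b)"
  by (simp add: rmul_def m_assoc)

lemma sum_singletons:
  fixes f :: "'a list \<Rightarrow> complex"
  assumes L: "L \<subseteq> carrier G"
  shows "(\<Sum>C\<in>((\<lambda>y. [y]) ` L) // balrel G H ((\<lambda>y. [y]) ` L). f (SOME ys. ys \<in> C)) = (\<Sum>y\<in>L. f [y])"
proof -
  have q: "((\<lambda>y. [y]) ` L) // balrel G H ((\<lambda>y. [y]) ` L) = (\<lambda>y. {[y]}) ` L"
  proof -
    have "balrel G H ((\<lambda>y. [y]) ` L) `` {[y]} = {[y]}" if "y \<in> L" for y
      using that L bal_single[of y] unfolding balrel_def by auto
    then show ?thesis unfolding quotient_def by auto
  qed
  have inj: "inj_on (\<lambda>y. {[y]}) L" by (auto intro: inj_onI)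
  show ?thesis unfolding q sum.reindex[OF inj] by simp
qed

lemma no_summand_aux:
  fixes x0 :: "'a list"
  assumes H: "subgroup H G" and L: "subgroup L G" and HL: "H \<subseteq> L" and fin: "finite (carrier G)"
    and S: "bimod_summand G H L H X ((\<lambda>y. [y]) ` L)"
    and x0: "x0 \<in> X" "x0 \<noteq> []" "set x0 \<subseteq> carrier G"
    and lX: "\<And>a. a \<in> L \<Longrightarrow> lmul G a x0 \<in> X"
    and b: "b \<in> H" and rX: "rmul G x0 b \<in> X"
  shows "(\<Sum>a\<in>L. if bal G H (rmul G x0 b) (lmul G a x0) then 1 else (0::complex))
       = (\<Sum>a\<in>L. if bal G H x0 (lmul G a x0) then 1 else 0)"
proof -
  define Y where "Y = (\<lambda>y. [y]) ` L"
  obtain k :: nat and \<iota> \<pi> where k: "(\<forall>j<k. well_def_mat G H Y X (\<iota> j) \<and> equiv_mat G L H Y X (\<iota> j)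
                \<and> well_def_mat G H X Y (\<pi> j) \<and> equiv_mat G L H X Y (\<pi> j))"
    and id: "\<forall>xs\<in>X. \<forall>xs'\<in>X.
             (\<Sum>j<k. \<Sum>C\<in>Y // balrel G H Y. (\<pi> j xs' (SOME ys. ys \<in> C) * \<iota> j (SOME ys. ys \<in> C) xs) :: complex)
             = (if bal G H xs' xs then 1 else 0)"
    using S unfolding bimod_summand_def Y_def by (elim exE conjE) blast
  have Lc: "L \<subseteq> carrier G" by (rule subgroup.subset[OF L])
  have finL: "finite L" using fin Lc finite_subset by blast
  have Hc: "H \<subseteq> carrier G" by (rule subgroup.subset[OF H])
  have hd0: "hd x0 \<in> carrier G" using x0 by (cases x0) auto
  have last0: "last x0 \<in> carrier G" using x0 by (cases x0 rule: rev_cases) auto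
  have bc: "b \<in> carrier G" using b Hc by blast
  define c where "c = (\<lambda>j. \<Sum>a\<in>L. \<iota> j [\<one>] (lmul G a x0))"
  have iota_sum: "(\<Sum>a\<in>L. \<iota> j [y] (lmul G a x0)) = c j" if j: "j < k" and y: "y \<in> L" for j y
  proof -
    have yc: "y \<in> carrier G" using y Lc by blast
    have "[y] \<in> Y" unfolding Y_def using y by blast
    have iy: "inv y \<in> L" by (rule subgroup.m_inv_closed[OF L y])
    have one: "\<one> \<in> H" by (rule subgroup.one_closed[OF H])
    have eqm: "equiv_mat G L H Y X (\<iota> j)" using k j by blast
    have "\<iota> j [y] (lmul G a x0) = \<iota> j [\<one>] (lmul G (inv y \<otimes> a) x0)" if a: "a \<in> L" for a
    proof -
      have ac: "a \<in> carrier G" using a Lc by blast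
      have "\<iota> j (rmul G (lmul G (inv y) [y]) \<one>) (rmul G (lmul G (inv y) (lmul G a x0)) \<one>) = \<iota> j [y] (lmul G a x0)"
        using eqm iy one lX[OF a] \<open>[y] \<in> Y\<close> unfolding equiv_mat_def by blast
      moreover have "rmul G (lmul G (inv y) [y]) \<one> = [\<one>]" using yc by (simp add: lmul_def rmul_def)
      moreover have "rmul G (lmul G (inv y) (lmul G a x0)) \<one> = lmul G (inv y \<otimes> a) x0"
      proof -
        have l1: "set (lmul G (inv y) (lmul G a x0)) \<subseteq> carrier G"
          using lmul_carrier[OF lmul_ne lmul_carrier[OF x0(2,3) ac]] yc by simp
        have "rmul G (lmul G (inv y) (lmul G a x0)) \<one> = lmul G (inv y) (lmul G a x0)"
          using rmul_one' l1 lmul_ne by blast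
        also have "\<dots> = lmul G (inv y \<otimes> a) x0"
          using lmul_lmul[OF x0(2) hd0 _ ac, of "inv y"] yc by simp
        finally show ?thesis .
      qed
      ultimately show ?thesis by simp
    qed
    then have "(\<Sum>a\<in>L. \<iota> j [y] (lmul G a x0)) = (\<Sum>a\<in>L. \<iota> j [\<one>] (lmul G (inv y \<otimes> a) x0))"
      by (rule sum.cong[OF refl])
    also have "\<dots> = c j" unfolding c_def
    proof (rule sum.reindex_bij_witness[where i = "\<lambda>a. y \<otimes> a" and j = "\<lambda>a. inv y \<otimes> a"])
      fix a assume a: "a \<in> L"
      then have ac: "a \<in> carrier G" using Lc by blast
      show "y \<otimes> (inv y \<otimes> a) = a" using ac yc by simp
      show "inv y \<otimes> a \<in> L" by (rule subgroup.m_closed[OF L iy a])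
      show "\<iota> j [\<one>] (lmul G (inv y \<otimes> a) x0) = \<iota> j [\<one>] (lmul G (inv y \<otimes> a) x0)" ..
    next
      fix a assume a: "a \<in> L"
      then have ac: "a \<in> carrier G" using Lc by blast
      show "inv y \<otimes> (y \<otimes> a) = a" using ac yc by simp
      show "y \<otimes> a \<in> L" by (rule subgroup.m_closed[OF L y a])
    qed
    finally show ?thesis .
  qed
  have pi_sum: "(\<Sum>y\<in>L. \<pi> j (rmul G x0 b) [y]) = (\<Sum>y\<in>L. \<pi> j x0 [y])" if j: "j < k" for j
  proof -
    have ib: "inv b \<in> H" by (rule subgroup.m_inv_closed[OF H b])
    have one: "\<one> \<in> L" by (rule subgroup.one_closed[OF L])
    have eqm: "equiv_mat G L H X Y (\<pi> j)" using k j by blast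
    have "\<pi> j (rmul G x0 b) [y] = \<pi> j x0 [y \<otimes> inv b]" if y: "y \<in> L" for y
    proof -
      have yc: "y \<in> carrier G" using y Lc by blast
    have "[y] \<in> Y" unfolding Y_def using y by blast
      have "\<pi> j (rmul G (lmul G \<one> (rmul G x0 b)) (inv b)) (rmul G (lmul G \<one> [y]) (inv b)) = \<pi> j (rmul G x0 b) [y]"
        using eqm ib one rX \<open>[y] \<in> Y\<close> unfolding equiv_mat_def by blast
      moreover have "rmul G (lmul G \<one> [y]) (inv b) = [y \<otimes> inv b]" using yc by (simp add: lmul_def rmul_def)
      moreover have "rmul G (lmul G \<one> (rmul G x0 b)) (inv b) = x0"
      proof -
        have "rmul G x0 b \<noteq> []" by (simp add: rmul_def)
        moreover have "hd (rmul G x0 b) \<in> carrier G" using rmul_carrier[OF x0(2,3) bc]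
          by (metis calculation hd_in_set subsetD)
        ultimately have "lmul G \<one> (rmul G x0 b) = rmul G x0 b" by (rule lmul_one)
        then show ?thesis using rmul_rmul[OF x0(2) last0 bc] bc rmul_one[OF x0(2) last0] by simp
      qed
      ultimately show ?thesis by simp
    qed
    then have "(\<Sum>y\<in>L. \<pi> j (rmul G x0 b) [y]) = (\<Sum>y\<in>L. \<pi> j x0 [y \<otimes> inv b])"
      by (rule sum.cong[OF refl])
    also have "\<dots> = (\<Sum>y\<in>L. \<pi> j x0 [y])"
    proof (rule sum.reindex_bij_witness[where i = "\<lambda>y. y \<otimes> b" and j = "\<lambda>y. y \<otimes> inv b"])
      fix y assume y: "y \<in> L"
      then have yc: "y \<in> carrier G" using Lc by blast
      show "y \<otimes> b \<otimes> inv b = y" using yc bc by (simp add: m_assoc)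
      show "y \<otimes> b \<in> L" using b HL by (intro subgroup.m_closed[OF L y]) blast
    next
      fix y assume y: "y \<in> L"
      then have yc: "y \<in> carrier G" using Lc by blast
      show "y \<otimes> inv b \<otimes> b = y" using yc bc by (simp add: m_assoc)
      show "y \<otimes> inv b \<in> L" using subgroup.m_inv_closed[OF H b] HL by (intro subgroup.m_closed[OF L y]) blast
      show "\<pi> j x0 [y \<otimes> inv b] = \<pi> j x0 [y \<otimes> inv b]" ..
    qed
    finally show ?thesis .
  qed
  have F: "(\<Sum>a\<in>L. if bal G H xs' (lmul G a x0) then 1 else (0::complex)) = (\<Sum>j<k. c j * (\<Sum>y\<in>L. \<pi> j xs' [y]))"
    if xs': "xs' \<in> X" for xs'
  proof -
    have "(\<Sum>a\<in>L. if bal G H xs' (lmul G a x0) then 1 else (0::complex))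
        = (\<Sum>a\<in>L. \<Sum>j<k. \<Sum>y\<in>L. \<pi> j xs' [y] * \<iota> j [y] (lmul G a x0))"
    proof (rule sum.cong[OF refl])
      fix a assume a: "a \<in> L"
      have "(\<Sum>j<k. \<Sum>C\<in>Y // balrel G H Y. \<pi> j xs' (SOME ys. ys \<in> C) * \<iota> j (SOME ys. ys \<in> C) (lmul G a x0))
          = (if bal G H xs' (lmul G a x0) then 1 else 0)" using id lX[OF a] xs' by blast
      moreover have "(\<Sum>C\<in>Y // balrel G H Y. \<pi> j xs' (SOME ys. ys \<in> C) * \<iota> j (SOME ys. ys \<in> C) (lmul G a x0))
          = (\<Sum>y\<in>L. \<pi> j xs' [y] * \<iota> j [y] (lmul G a x0))" for j
        unfolding Y_def by (rule sum_singletons[OF Lc])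
      ultimately show "(if bal G H xs' (lmul G a x0) then 1 else (0::complex))
          = (\<Sum>j<k. \<Sum>y\<in>L. \<pi> j xs' [y] * \<iota> j [y] (lmul G a x0))" by simp
    qed
    also have "\<dots> = (\<Sum>j<k. \<Sum>a\<in>L. \<Sum>y\<in>L. \<pi> j xs' [y] * \<iota> j [y] (lmul G a x0))"
      by (rule sum.swap)
    also have "\<dots> = (\<Sum>j<k. \<Sum>y\<in>L. \<Sum>a\<in>L. \<pi> j xs' [y] * \<iota> j [y] (lmul G a x0))"
      by (rule sum.cong[OF refl], rule sum.swap)
    also have "\<dots> = (\<Sum>j<k. \<Sum>y\<in>L. \<pi> j xs' [y] * c j)"
      by (intro sum.cong refl) (simp add: sum_distrib_left[symmetric] iota_sum)
    also have "\<dots> = (\<Sum>j<k. c j * (\<Sum>y\<in>L. \<pi> j xs' [y]))"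
      by (intro sum.cong refl) (simp add: sum_distrib_left mult.commute)
    finally show ?thesis .
  qed
  have "(\<Sum>j<k. c j * (\<Sum>y\<in>L. \<pi> j (rmul G x0 b) [y])) = (\<Sum>j<k. c j * (\<Sum>y\<in>L. \<pi> j x0 [y]))"
    by (intro sum.cong refl) (simp add: pi_sum)
  then show ?thesis using F[OF rX] F[OF x0(1)] by simp
qed

end

context group begin

lemma exists_nonnormal:
  assumes H: "subgroup H G" and ne: "H \<noteq> {\<one>}" and cf: "core_free G H"
  shows "\<exists>g\<in>carrier G. \<exists>b\<in>H. g \<otimes> b \<otimes> inv g \<notin> H"
proof (rule ccontr)
  assume A: "\<not> (\<exists>g\<in>carrier G. \<exists>b\<in>H. g \<otimes> b \<otimes> inv g \<notin> H)"
  obtain h where h: "h \<in> H" "h \<noteq> \<one>" using ne subgroup.one_closed[OF H] by blast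
  have hc: "h \<in> carrier G" using h subgroup.mem_carrier[OF H] by blast
  have "h \<in> (inv g <# H) #> g" if g: "g \<in> carrier G" for g
  proof -
    have x: "g \<otimes> h \<otimes> inv g \<in> H" using A g h by blast
    have "inv g \<otimes> (g \<otimes> h \<otimes> inv g) \<in> inv g <# H" unfolding l_coset_def using x by blast
    moreover have "h = (inv g \<otimes> (g \<otimes> h \<otimes> inv g)) \<otimes> g" using g hc by (simp add: m_assoc)
    ultimately show ?thesis unfolding r_coset_def by blast
  qed
  then have "h \<in> (\<Inter>g\<in>carrier G. (inv g <# H) #> g)" by blast
  then show False using cf h(2) unfolding core_free_def by blast
qed

lemma conj_eq: "a \<in> carrier G \<Longrightarrow> g \<in> carrier G \<Longrightarrow> b \<in> carrier G \<Longrightarrow> a \<otimes> g = g \<otimes> b \<Longrightarrow> a = g \<otimes> b \<otimes> inv g"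
  by (metis inv_solve_right m_closed inv_closed)

lemma not_depth1:
  assumes H: "subgroup H G" and fin: "finite (carrier G)" and g: "g \<in> carrier G" and b: "b \<in> H"
    and nn: "g \<otimes> b \<otimes> inv g \<notin> H"
  shows "\<not> bimod_summand G H H H (tuples G 1) {[h] | h. h \<in> H}"
proof
  assume S0: "bimod_summand G H H H (tuples G 1) {[h] | h. h \<in> H}"
  have Y: "{[h] | h. h \<in> H} = (\<lambda>y. [y]) ` H" by auto
  have Hc: "H \<subseteq> carrier G" using subgroup.subset[OF H] .
  have bc: "b \<in> carrier G" using b Hc by blast
  have S: "bimod_summand G H H H (tuples G 1) ((\<lambda>y. [y]) ` H)" using S0 Y by simp
  have x0: "[g] \<in> tuples G 1" "[g] \<noteq> []" "set [g] \<subseteq> carrier G" using g by (auto simp: tuples_def)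
  have lm: "lmul G a [g] = [a \<otimes> g]" for a by (simp add: lmul_def)
  have rm: "rmul G [g] b = [g \<otimes> b]" by (simp add: rmul_def)
  have lX: "lmul G a [g] \<in> tuples G 1" if "a \<in> H" for a using that Hc g lm by (auto simp: tuples_def)
  have rX: "rmul G [g] b \<in> tuples G 1" using rm g bc by (auto simp: tuples_def)
  have E: "(\<Sum>a\<in>H. if bal G H (rmul G [g] b) (lmul G a [g]) then 1 else (0::complex))
       = (\<Sum>a\<in>H. if bal G H [g] (lmul G a [g]) then 1 else 0)"
    using no_summand_aux[OF H H subset_refl fin S x0 lX b rX] by blast
  have "(\<Sum>a\<in>H. if bal G H (rmul G [g] b) (lmul G a [g]) then 1 else (0::complex)) = 0"
  proof (rule sum.neutral, rule ballI)
    fix a assume a: "a \<in> H"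
    have ac: "a \<in> carrier G" using a Hc by blast
    have "\<not> bal G H (rmul G [g] b) (lmul G a [g])"
    proof
      assume "bal G H (rmul G [g] b) (lmul G a [g])"
      then have "a \<otimes> g = g \<otimes> b" using bal_single[of "g \<otimes> b" H] g bc lm rm by simp
      then have "a = g \<otimes> b \<otimes> inv g" using conj_eq ac g bc by blast
      then show False using a nn by simp
    qed
    then show "(if bal G H (rmul G [g] b) (lmul G a [g]) then 1 else (0::complex)) = 0" by simp
  qed
  moreover have "(\<Sum>a\<in>H. if bal G H [g] (lmul G a [g]) then 1 else (0::complex)) = 1"
  proof -
    have "(if bal G H [g] (lmul G a [g]) then 1 else (0::complex)) = (if a = \<one> then 1 else 0)" if a: "a \<in> H" for a
    proof -
      have ac: "a \<in> carrier G" using a Hc by blast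
      have "bal G H [g] (lmul G a [g]) \<longleftrightarrow> a = \<one>" using bal_single[OF g, of H] lm ac g by simp
      then show ?thesis by simp
    qed
    then have "(\<Sum>a\<in>H. if bal G H [g] (lmul G a [g]) then 1 else (0::complex)) = (\<Sum>a\<in>H. if a = \<one> then 1 else 0)"
      by (rule sum.cong[OF refl])
    also have "\<dots> = 1"
    proof -
      have "finite H" using fin Hc finite_subset by blast
      then show ?thesis using subgroup.one_closed[OF H] by (simp add: sum.delta sum.delta')
    qed
    finally show ?thesis .
  qed
  ultimately show False using E by simp
qed

lemma two_idx: "(\<forall>i::nat. 0 < i \<and> i < Suc (Suc 0) \<longrightarrow> P i) \<longleftrightarrow> P (Suc 0)"
proof
  assume "\<forall>i::nat. 0 < i \<and> i < Suc (Suc 0) \<longrightarrow> P i" then show "P (Suc 0)" by simp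
next
  assume p: "P (Suc 0)"
  show "\<forall>i::nat. 0 < i \<and> i < Suc (Suc 0) \<longrightarrow> P i"
  proof (intro allI impI)
    fix i :: nat assume "0 < i \<and> i < Suc (Suc 0)"
    then have "i = Suc 0" by linarith
    then show "P i" using p by simp
  qed
qed

lemma bal_two:
  assumes H: "subgroup H G" and c: "x1 \<in> carrier G" "x2 \<in> carrier G" "y1 \<in> carrier G" "y2 \<in> carrier G"
  shows "bal G H [x1, x2] [y1, y2] \<longleftrightarrow> inv x1 \<otimes> y1 \<in> H \<and> y1 \<otimes> y2 = x1 \<otimes> x2"
proof -
  have "pp G [x1, x2] (Suc 0) = x1" "pp G [y1, y2] (Suc 0) = y1" using c by (simp_all add: pp_def)
  moreover have "pp G [x1, x2] (Suc (Suc 0)) = x1 \<otimes> x2" "pp G [y1, y2] (Suc (Suc 0)) = y1 \<otimes> y2" using c by (simp_all add: pp_def)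
  ultimately show ?thesis using bal_char[OF H, of "[x1, x2]" "[y1, y2]"] c two_idx by simp
qed

lemma tuples_one: "tuples G 1 = (\<lambda>y. [y]) ` carrier G"
proof
  show "tuples G 1 \<subseteq> (\<lambda>y. [y]) ` carrier G"
  proof
    fix xs assume "xs \<in> tuples G 1"
    then have "length xs = 1" "set xs \<subseteq> carrier G" unfolding tuples_def by auto
    then obtain y where "xs = [y]" "y \<in> carrier G" by (metis One_nat_def length_0_conv length_Suc_conv list.set_intros(1) subsetD)
    then show "xs \<in> (\<lambda>y. [y]) ` carrier G" by blast
  qed
  show "(\<lambda>y. [y]) ` carrier G \<subseteq> tuples G 1" unfolding tuples_def by auto
qed

lemma not_depth2:
  assumes H: "subgroup H G" and fin: "finite (carrier G)" and g: "g \<in> carrier G" and b: "b \<in> H"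
    and nn: "g \<otimes> b \<otimes> inv g \<notin> H"
  shows "\<not> bimod_summand G H (carrier G) H (tuples G 2) (tuples G 1)"
proof
  assume S0: "bimod_summand G H (carrier G) H (tuples G 2) (tuples G 1)"
  have Hc: "H \<subseteq> carrier G" using subgroup.subset[OF H] .
  have bc: "b \<in> carrier G" using b Hc by blast
  have S: "bimod_summand G H (carrier G) H (tuples G 2) ((\<lambda>y. [y]) ` carrier G)" using S0 tuples_one by simp
  have x0: "[\<one>, g] \<in> tuples G 2" "[\<one>, g] \<noteq> []" "set [\<one>, g] \<subseteq> carrier G" using g by (auto simp: tuples_def)
  have lm: "lmul G a [\<one>, g] = [a, g]" if "a \<in> carrier G" for a using that by (simp add: lmul_def)
  have rm: "rmul G [\<one>, g] b = [\<one>, g \<otimes> b]" by (simp add: rmul_def)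
  have lX: "lmul G a [\<one>, g] \<in> tuples G 2" if "a \<in> carrier G" for a using that g lm by (auto simp: tuples_def)
  have rX: "rmul G [\<one>, g] b \<in> tuples G 2" using rm g bc by (auto simp: tuples_def)
  have E: "(\<Sum>a\<in>carrier G. if bal G H (rmul G [\<one>, g] b) (lmul G a [\<one>, g]) then 1 else (0::complex))
       = (\<Sum>a\<in>carrier G. if bal G H [\<one>, g] (lmul G a [\<one>, g]) then 1 else 0)"
    using no_summand_aux[OF H subgroup_self Hc fin S x0 lX b rX] by blast
  have "(\<Sum>a\<in>carrier G. if bal G H (rmul G [\<one>, g] b) (lmul G a [\<one>, g]) then 1 else (0::complex)) = 0"
  proof (rule sum.neutral, rule ballI)
    fix a assume ac: "a \<in> carrier G"
    have "\<not> bal G H (rmul G [\<one>, g] b) (lmul G a [\<one>, g])"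
    proof
      assume "bal G H (rmul G [\<one>, g] b) (lmul G a [\<one>, g])"
      then have "a \<in> H" "a \<otimes> g = g \<otimes> b" using bal_two[OF H, of \<one> "g \<otimes> b" a g] g bc lm[OF ac] rm ac by simp_all
      then have "a = g \<otimes> b \<otimes> inv g" "a \<in> H" using conj_eq ac g bc by blast+
      then show False using nn by simp
    qed
    then show "(if bal G H (rmul G [\<one>, g] b) (lmul G a [\<one>, g]) then 1 else (0::complex)) = 0" by simp
  qed
  moreover have "(\<Sum>a\<in>carrier G. if bal G H [\<one>, g] (lmul G a [\<one>, g]) then 1 else (0::complex)) = 1"
  proof -
    have "(if bal G H [\<one>, g] (lmul G a [\<one>, g]) then 1 else (0::complex)) = (if a = \<one> then 1 else 0)" if ac: "a \<in> carrier G" for a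
    proof -
      have "bal G H [\<one>, g] (lmul G a [\<one>, g]) \<longleftrightarrow> a = \<one>"
        using bal_two[OF H, of \<one> g a g] lm[OF ac] ac g subgroup.one_closed[OF H] by auto
      then show ?thesis by simp
    qed
    then have "(\<Sum>a\<in>carrier G. if bal G H [\<one>, g] (lmul G a [\<one>, g]) then 1 else (0::complex)) = (\<Sum>a\<in>carrier G. if a = \<one> then 1 else 0)"
      by (rule sum.cong[OF refl])
    also have "\<dots> = 1" using fin by (simp add: sum.delta sum.delta')
    finally show ?thesis .
  qed
  ultimately show False using E by simp
qed

end

context group begin

lemma lcos_fix:
  assumes H: "subgroup H G" and a: "a \<in> carrier G" and x: "x \<in> carrier G" and h: "inv a \<otimes> x \<otimes> a \<in> H"
  shows "x <# (a <# H) = a <# H"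
proof -
  have Hc: "H \<subseteq> carrier G" using subgroup.subset[OF H] .
  have hc: "inv a \<otimes> x \<otimes> a \<in> carrier G" using a x by simp
  have "x <# (a <# H) = (x \<otimes> a) <# H" using lcos_m_assoc[OF Hc x a] .
  also have "x \<otimes> a = a \<otimes> (inv a \<otimes> x \<otimes> a)" using a x by (simp add: m_assoc)
  also have "(a \<otimes> (inv a \<otimes> x \<otimes> a)) <# H = a <# ((inv a \<otimes> x \<otimes> a) <# H)"
    using lcos_m_assoc[OF Hc a hc] by simp
  also have "(inv a \<otimes> x \<otimes> a) <# H = H" using coset_join3[OF hc H h] .
  finally show ?thesis .
qed

lemma free_from_r:
  assumes H: "subgroup H G" and m: "1 \<le> m" and r: "\<And>i. r i \<in> carrier G"
    and base: "\<And>u. u \<in> H \<Longrightarrow> (\<And>i. 1 \<le> i \<Longrightarrow> i \<le> m \<Longrightarrow> inv (inv (r 0) \<otimes> r i) \<otimes> u \<otimes> (inv (r 0) \<otimes> r i) \<in> H) \<Longrightarrow> u = \<one>"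
  shows "map (\<lambda>i. inv (r i) \<otimes> r (Suc i)) [0..<m] \<in> tuples G m"
    and "\<And>h1 h2 h1' h2'. h1 \<in> H \<Longrightarrow> h2 \<in> H \<Longrightarrow> h1' \<in> H \<Longrightarrow> h2' \<in> H \<Longrightarrow>
       bal G H (act G h1 h2 (map (\<lambda>i. inv (r i) \<otimes> r (Suc i)) [0..<m]))
               (act G h1' h2' (map (\<lambda>i. inv (r i) \<otimes> r (Suc i)) [0..<m])) \<Longrightarrow> h1 = h1' \<and> h2 = h2'"
proof -
  define y0 where "y0 = map (\<lambda>i. inv (r i) \<otimes> r (Suc i)) [0..<m]"
  define P where "P = (\<lambda>i. inv (r 0) \<otimes> r i)"
  have Pc: "P i \<in> carrier G" for i using r by (simp add: P_def)
  have yc: "set y0 \<subseteq> carrier G" using r by (auto simp: y0_def)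
  have len: "length y0 = m" by (simp add: y0_def)
  have yne: "y0 \<noteq> []" using len m by auto
  show "map (\<lambda>i. inv (r i) \<otimes> r (Suc i)) [0..<m] \<in> tuples G m"
    using yc len unfolding tuples_def y0_def by simp
  have ppy: "i \<le> m \<Longrightarrow> pp G y0 i = P i" for i
  proof (induction i)
    case 0 then show ?case using r by (simp add: P_def)
  next
    case (Suc i)
    then have i: "i < length y0" using len by simp
    have "pp G y0 (Suc i) = P i \<otimes> (inv (r i) \<otimes> r (Suc i))"
      using pp_Suc[OF yc i] Suc i len by (simp add: y0_def)
    also have "\<dots> = P (Suc i)" using r by (simp add: P_def m_assoc)
    finally show ?case .
  qed
  fix h1 h2 h1' h2' assume h: "h1 \<in> H" "h2 \<in> H" "h1' \<in> H" "h2' \<in> H"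
    and b: "bal G H (act G h1 h2 (map (\<lambda>i. inv (r i) \<otimes> r (Suc i)) [0..<m]))
               (act G h1' h2' (map (\<lambda>i. inv (r i) \<otimes> r (Suc i)) [0..<m]))"
  have hc: "h1 \<in> carrier G" "h2 \<in> carrier G" "h1' \<in> carrier G" "h2' \<in> carrier G"
    using h subgroup.mem_carrier[OF H] by auto
  have b': "bal G H (act G h1 h2 y0) (act G h1' h2' y0)" using b by (simp add: y0_def)
  have ac: "set (act G h1 h2 y0) \<subseteq> carrier G" using act_carrier[OF yne yc hc(1,2)] .
  have R: "\<And>i. 0 < i \<and> i < m \<longrightarrow> inv (pp G (act G h1 h2 y0) i) \<otimes> pp G (act G h1' h2' y0) i \<in> H"
    "pp G (act G h1' h2' y0) m = pp G (act G h1 h2 y0) m"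
    using b' bal_char[OF H ac] len yne by auto
  define u where "u = inv h1 \<otimes> h1'"
  have uH: "u \<in> H" unfolding u_def using h subgroup.m_closed[OF H] subgroup.m_inv_closed[OF H] by blast
  have eqm: "h1' \<otimes> P m \<otimes> h2' = h1 \<otimes> P m \<otimes> h2"
    using R(2) pp_act[OF yne yc hc(3,4), of m] pp_act[OF yne yc hc(1,2), of m] ppy[of m] len m by simp
  have "inv (P i) \<otimes> u \<otimes> P i \<in> H" if i: "1 \<le> i" "i \<le> m" for i
  proof (cases "i = m")
    case True
    have "inv (P m) \<otimes> u \<otimes> P m = inv (P m) \<otimes> inv h1 \<otimes> (h1' \<otimes> P m \<otimes> h2') \<otimes> inv h2'"
      using hc Pc by (simp add: u_def m_assoc)
    also have "\<dots> = inv (P m) \<otimes> inv h1 \<otimes> (h1 \<otimes> P m \<otimes> h2) \<otimes> inv h2'" using eqm by simp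
    also have "\<dots> = h2 \<otimes> inv h2'" using hc Pc by (simp add: m_assoc)
    finally have "inv (P m) \<otimes> u \<otimes> P m = h2 \<otimes> inv h2'" .
    moreover have "h2 \<otimes> inv h2' \<in> H" using h subgroup.m_closed[OF H] subgroup.m_inv_closed[OF H] by blast
    ultimately show ?thesis using True by simp
  next
    case False
    then have i': "0 < i \<and> i < m" using i by simp
    have "inv (pp G (act G h1 h2 y0) i) \<otimes> pp G (act G h1' h2' y0) i = inv (h1 \<otimes> P i) \<otimes> (h1' \<otimes> P i)"
      using pp_act[OF yne yc hc(3,4), of i] pp_act[OF yne yc hc(1,2), of i] ppy[of i] len i' by simp
    also have "\<dots> = inv (P i) \<otimes> u \<otimes> P i" using hc Pc by (simp add: u_def m_assoc inv_mult_group)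
    finally show ?thesis using R(1)[of i] i' by simp
  qed
  then have "u = \<one>" using base[OF uH] unfolding P_def by blast
  then have e1: "h1' = h1" unfolding u_def using hc inv_solve_left' by (metis r_one one_closed)
  then have "h1 \<otimes> P m \<otimes> h2' = h1 \<otimes> P m \<otimes> h2" using eqm by simp
  then have "h2' = h2" using hc Pc by (simp add: m_assoc)
  then show "h1 = h1' \<and> h2 = h2'" using e1 by simp
qed

end

definition fixset :: "('a, 'b) monoid_scheme \<Rightarrow> 'a set \<Rightarrow> 'a \<Rightarrow> 'a set set" where
  "fixset G H x = {C \<in> left_cosets G H. x <#\<^bsub>G\<^esub> C = C}"

context group begin

lemma coset_sub: "subgroup H G \<Longrightarrow> C \<in> left_cosets G H \<Longrightarrow> C \<subseteq> carrier G"
  unfolding left_cosets_def using l_coset_subset_G subgroup.subset by blast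

lemma finite_cosets: "subgroup H G \<Longrightarrow> finite (carrier G) \<Longrightarrow> finite (left_cosets G H)"
proof -
  assume H: "subgroup H G" and f: "finite (carrier G)"
  have "left_cosets G H \<subseteq> Pow (carrier G)" using coset_sub[OF H] by blast
  then show ?thesis using f finite_subset by blast
qed

lemma H_coset: "subgroup H G \<Longrightarrow> H \<in> left_cosets G H"
proof -
  assume H: "subgroup H G"
  have "\<one> <# H = H" by (rule lcos_mult_one[OF subgroup.subset[OF H]])
  then show ?thesis unfolding left_cosets_def by (intro CollectI exI[of _ "\<one>"]) simp
qed

lemma coset_mult: "subgroup H G \<Longrightarrow> C \<in> left_cosets G H \<Longrightarrow> g \<in> carrier G \<Longrightarrow> g <# C \<in> left_cosets G H"
proof -
  assume H: "subgroup H G" and C: "C \<in> left_cosets G H" and g: "g \<in> carrier G"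
  obtain a where a: "a \<in> carrier G" "C = a <# H" using C unfolding left_cosets_def by blast
  have "g <# C = (g \<otimes> a) <# H" using a lcos_m_assoc[OF subgroup.subset[OF H] g a(1)] by simp
  moreover have "g \<otimes> a \<in> carrier G" using a g by simp
  ultimately show ?thesis unfolding left_cosets_def by (intro CollectI exI[of _ "g \<otimes> a"]) simp
qed

lemma fix_le:
  assumes H: "subgroup H G" and fin: "finite (carrier G)" and x: "x \<in> carrier G" and g: "g \<in> carrier G"
  shows "card (fixset G H x) \<le> card (fixset G H (g \<otimes> x \<otimes> inv g))"
proof (rule card_inj_on_le)
  show "inj_on (\<lambda>C. g <# C) (fixset G H x)"
  proof (rule inj_onI)
    fix C C' assume C: "C \<in> fixset G H x" "C' \<in> fixset G H x" and e: "g <# C = g <# C'"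
    have "C \<in> left_cosets G H" "C' \<in> left_cosets G H" using C unfolding fixset_def by auto
    then have Cc: "C \<subseteq> carrier G" "C' \<subseteq> carrier G" using coset_sub[OF H] by auto
    have "inv g <# (g <# C) = (inv g \<otimes> g) <# C" by (rule lcos_m_assoc[OF Cc(1) inv_closed[OF g] g])
    also have "\<dots> = C" using g lcos_mult_one[OF Cc(1)] by simp
    finally have "inv g <# (g <# C) = C" .
    have "inv g <# (g <# C') = (inv g \<otimes> g) <# C'" by (rule lcos_m_assoc[OF Cc(2) inv_closed[OF g] g])
    also have "\<dots> = C'" using g lcos_mult_one[OF Cc(2)] by simp
    finally have "inv g <# (g <# C') = C'" .
    note this \<open>inv g <# (g <# C) = C\<close>
    then show "C = C'" using e by metis
  qed
  show "(\<lambda>C. g <# C) ` fixset G H x \<subseteq> fixset G H (g \<otimes> x \<otimes> inv g)"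
  proof
    fix D assume "D \<in> (\<lambda>C. g <# C) ` fixset G H x"
    then obtain C where C: "C \<in> fixset G H x" and D: "D = g <# C" by blast
    have CO: "C \<in> left_cosets G H" and fx: "x <# C = C" using C unfolding fixset_def by auto
    have Cc: "C \<subseteq> carrier G" using coset_sub[OF H CO] .
    have "(g \<otimes> x \<otimes> inv g) <# (g <# C) = (g \<otimes> x \<otimes> inv g \<otimes> g) <# C"
      using lcos_m_assoc[OF Cc] g x by simp
    also have "g \<otimes> x \<otimes> inv g \<otimes> g = g \<otimes> x" using g x by (simp add: m_assoc)
    also have "(g \<otimes> x) <# C = g <# (x <# C)" using lcos_m_assoc[OF Cc g x] by simp
    finally have "(g \<otimes> x \<otimes> inv g) <# D = D" using fx D by simp
    moreover have "D \<in> left_cosets G H" using coset_mult[OF H CO g] D by simp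
    ultimately show "D \<in> fixset G H (g \<otimes> x \<otimes> inv g)" unfolding fixset_def by simp
  qed
  show "finite (fixset G H (g \<otimes> x \<otimes> inv g))" using finite_cosets[OF H fin] unfolding fixset_def by simp
qed

lemma pc_conj:
  assumes H: "subgroup H G" and fin: "finite (carrier G)" and x: "x \<in> carrier G" and g: "g \<in> carrier G"
  shows "perm_char G H (g \<otimes> x \<otimes> inv g) = perm_char G H x"
proof -
  have a: "card (fixset G H x) \<le> card (fixset G H (g \<otimes> x \<otimes> inv g))" using fix_le[OF H fin x g] .
  have "card (fixset G H (g \<otimes> x \<otimes> inv g)) \<le> card (fixset G H (inv g \<otimes> (g \<otimes> x \<otimes> inv g) \<otimes> inv (inv g)))"
    using fix_le[OF H fin _ inv_closed[OF g], of "g \<otimes> x \<otimes> inv g"] x g by simp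
  also have "inv g \<otimes> (g \<otimes> x \<otimes> inv g) \<otimes> inv (inv g) = x" using x g by (simp add: m_assoc)
  finally show ?thesis using a unfolding perm_char_def fixset_def by simp
qed

lemma pow_conj: "x \<in> carrier G \<Longrightarrow> g \<in> carrier G \<Longrightarrow> (g \<otimes> x \<otimes> inv g) [^] (n::nat) = g \<otimes> x [^] n \<otimes> inv g"
proof (induction n)
  case 0 then show ?case by simp
next
  case (Suc n)
  then show ?case by (simp add: m_assoc)
qed

lemma ord_conj:
  assumes x: "x \<in> carrier G" and g: "g \<in> carrier G"
  shows "ord (g \<otimes> x \<otimes> inv g) = ord x"
proof -
  have "(g \<otimes> x \<otimes> inv g) [^] n = \<one> \<longleftrightarrow> ord x dvd n" for n :: nat
  proof -
    have "(g \<otimes> x \<otimes> inv g) [^] n = \<one> \<longleftrightarrow> g \<otimes> x [^] n \<otimes> inv g = \<one>" using pow_conj[OF x g] by simp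
    also have "\<dots> \<longleftrightarrow> x [^] n = \<one>"
    proof
      assume "g \<otimes> x [^] n \<otimes> inv g = \<one>"
      then have "inv g \<otimes> (g \<otimes> x [^] n \<otimes> inv g) \<otimes> g = inv g \<otimes> \<one> \<otimes> g" by simp
      then show "x [^] n = \<one>" using x g by (simp add: m_assoc)
    next
      assume "x [^] n = \<one>" then show "g \<otimes> x [^] n \<otimes> inv g = \<one>" using g by simp
    qed
    also have "\<dots> \<longleftrightarrow> ord x dvd n" using pow_eq_id[OF x] .
    finally show ?thesis .
  qed
  then show ?thesis using ord_unique[of "g \<otimes> x \<otimes> inv g" "ord x"] x g by simp
qed

lemma cc_self: "x \<in> carrier G \<Longrightarrow> x \<in> conj_class G x"
  unfolding conj_class_def by (rule CollectI, rule exI[of _ \<one>]) simp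

lemma cc_mem: "x \<in> carrier G \<Longrightarrow> y \<in> conj_class G x \<Longrightarrow> \<exists>g\<in>carrier G. y = g \<otimes> x \<otimes> inv g"
  unfolding conj_class_def by blast

lemma cc_sub: "x \<in> carrier G \<Longrightarrow> conj_class G x \<subseteq> carrier G"
  unfolding conj_class_def by auto

lemma cc_eq:
  assumes x: "x \<in> carrier G" and y: "y \<in> conj_class G x"
  shows "conj_class G y = conj_class G x"
proof -
  obtain g where g: "g \<in> carrier G" "y = g \<otimes> x \<otimes> inv g" using cc_mem[OF x y] by blast
  show ?thesis
  proof
    show "conj_class G y \<subseteq> conj_class G x"
    proof
      fix z assume "z \<in> conj_class G y"
      then obtain h where h: "h \<in> carrier G" "z = h \<otimes> y \<otimes> inv h" unfolding conj_class_def by blast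
      have "z = (h \<otimes> g) \<otimes> x \<otimes> inv (h \<otimes> g)" using h g x by (simp add: m_assoc inv_mult_group)
      then show "z \<in> conj_class G x" unfolding conj_class_def using h g by blast
    qed
    show "conj_class G x \<subseteq> conj_class G y"
    proof
      fix z assume "z \<in> conj_class G x"
      then obtain h where h: "h \<in> carrier G" "z = h \<otimes> x \<otimes> inv h" unfolding conj_class_def by blast
      have "z = (h \<otimes> inv g) \<otimes> y \<otimes> inv (h \<otimes> inv g)" using h g x by (simp add: m_assoc inv_mult_group)
      then show "z \<in> conj_class G y" unfolding conj_class_def using h g by blast
    qed
  qed
qed

lemma prime_power:
  assumes fin: "finite (carrier G)" and g: "g \<in> carrier G" and ne: "g \<noteq> \<one>"
  shows "\<exists>k::nat. prime (ord (g [^] k))"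
proof -
  have o1: "ord g \<ge> 1" using ord_ge_1[OF fin g] .
  have o2: "ord g \<noteq> 1" using ord_eq_1[OF g] ne by simp
  obtain p where p: "prime p" "p dvd ord g" using prime_factor_nat[OF o2] by blast
  define k where "k = ord g div p"
  have pk: "ord g = p * k" using p(2) unfolding k_def by simp
  have k0: "k \<noteq> 0" using pk o1 by auto
  have kd: "k dvd ord g" using pk by simp
  have "ord (g [^] k) = ord g div k" using ord_pow[OF g kd k0] .
  also have "\<dots> = p" using pk k0 by simp
  finally show ?thesis using p(1) by auto
qed

lemma pow_fix:
  assumes H: "subgroup H G" and g: "g \<in> carrier G" and C: "C \<in> left_cosets G H" and f: "g <# C = C"
  shows "(g [^] (n::nat)) <# C = C"
proof (induction n)
  case 0 then show ?case using lcos_mult_one[OF coset_sub[OF H C]] by simp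
next
  case (Suc n)
  have "(g [^] Suc n) <# C = (g [^] n) <# (g <# C)" using lcos_m_assoc[OF coset_sub[OF H C]] g by simp
  then show ?case using f Suc by simp
qed

end

context group begin

lemma Q_eq:
  assumes H: "subgroup H G" and fin: "finite (carrier G)"
  shows "Q G H t * real (card (left_cosets G H)) ^ t = (\<Sum>x\<in>{x \<in> carrier G. prime (ord x)}. real (perm_char G H x) ^ t)"
proof -
  define n where "n = card (left_cosets G H)"
  define P where "P = {x \<in> carrier G. prime (ord x)}"
  define CL where "CL = {conj_class G x | x. x \<in> carrier G \<and> prime (ord x)}"
  have n0: "n > 0" unfolding n_def using finite_cosets[OF H fin] H_coset[OF H] card_gt_0_iff by blast
  have pcC: "perm_char G H y = perm_char G H x" if x: "x \<in> carrier G" and y: "y \<in> conj_class G x" for x y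
  proof -
    obtain g where g: "g \<in> carrier G" "y = g \<otimes> x \<otimes> inv g" using cc_mem[OF x y] by blast
    then show ?thesis using pc_conj[OF H fin x g(1)] by simp
  qed
  have finCL: "finite CL"
  proof -
    have "CL \<subseteq> Pow (carrier G)" unfolding CL_def using cc_sub by blast
    then show ?thesis using fin finite_subset by blast
  qed
  have finC: "\<forall>C\<in>CL. finite C" unfolding CL_def using cc_sub fin finite_subset by blast
  have disj: "\<forall>A\<in>CL. \<forall>B\<in>CL. A \<noteq> B \<longrightarrow> A \<inter> B = {}"
  proof (intro ballI impI)
    fix A B assume A: "A \<in> CL" and B: "B \<in> CL" and ne: "A \<noteq> B"
    obtain a where a: "a \<in> carrier G" "A = conj_class G a" using A unfolding CL_def by blast
    obtain b where b: "b \<in> carrier G" "B = conj_class G b" using B unfolding CL_def by blast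
    show "A \<inter> B = {}"
    proof (rule ccontr)
      assume "A \<inter> B \<noteq> {}"
      then obtain z where z: "z \<in> A" "z \<in> B" by blast
      have "conj_class G z = A" using cc_eq[OF a(1)] z a by simp
      moreover have "conj_class G z = B" using cc_eq[OF b(1)] z b by simp
      ultimately show False using ne by simp
    qed
  qed
  have UP: "\<Union>CL = P"
  proof
    show "\<Union>CL \<subseteq> P"
    proof
      fix y assume "y \<in> \<Union>CL"
      then obtain x where x: "x \<in> carrier G" "prime (ord x)" "y \<in> conj_class G x" unfolding CL_def by blast
      obtain g where g: "g \<in> carrier G" "y = g \<otimes> x \<otimes> inv g" using cc_mem[OF x(1) x(3)] by blast
      have "ord y = ord x" using ord_conj[OF x(1) g(1)] g(2) by simp
      moreover have "y \<in> carrier G" using g x by simp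
      ultimately show "y \<in> P" unfolding P_def using x(2) by simp
    qed
    show "P \<subseteq> \<Union>CL"
    proof
      fix x assume "x \<in> P"
      then have x: "x \<in> carrier G" "prime (ord x)" unfolding P_def by auto
      then have "conj_class G x \<in> CL" unfolding CL_def by blast
      then show "x \<in> \<Union>CL" using cc_self[OF x(1)] by blast
    qed
  qed
  have termC: "real (card C) * (real (perm_char G H (SOME x. x \<in> C)) / real n) ^ t
       = (\<Sum>y\<in>C. (real (perm_char G H y) / real n) ^ t)" if C: "C \<in> CL" for C
  proof -
    obtain x where x: "x \<in> carrier G" "C = conj_class G x" using C unfolding CL_def by blast
    have "(SOME x. x \<in> C) \<in> C" using cc_self[OF x(1)] x(2) by (metis someI_ex)
    then have r: "perm_char G H (SOME x. x \<in> C) = perm_char G H x" using pcC x by simp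
    have "(\<Sum>y\<in>C. (real (perm_char G H y) / real n) ^ t) = (\<Sum>y\<in>C. (real (perm_char G H x) / real n) ^ t)"
      using pcC x by (intro sum.cong) auto
    also have "\<dots> = real (card C) * (real (perm_char G H x) / real n) ^ t" by simp
    finally show ?thesis using r by simp
  qed
  have "Q G H t = (\<Sum>C\<in>CL. \<Sum>y\<in>C. (real (perm_char G H y) / real n) ^ t)"
    unfolding Q_def n_def[symmetric] CL_def[symmetric] using termC by (rule sum.cong[OF refl])
  also have "\<dots> = (\<Sum>y\<in>\<Union>CL. (real (perm_char G H y) / real n) ^ t)"
    using sum.Union_disjoint[OF finC disj] by (metis comp_apply)
  also have "\<dots> = (\<Sum>y\<in>P. real (perm_char G H y) ^ t) / real n ^ t"
    unfolding UP by (simp add: power_divide sum_divide_distrib)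
  finally have "Q G H t = (\<Sum>y\<in>P. real (perm_char G H y) ^ t) / real n ^ t" .
  then show ?thesis using n0 unfolding n_def[symmetric] P_def[symmetric] by simp
qed

lemma good_tuple:
  assumes H: "subgroup H G" and fin: "finite (carrier G)" and Q1: "Q G H t < 1"
  shows "\<exists>ws. set ws \<subseteq> left_cosets G H \<and> length ws = t \<and>
            (\<forall>g\<in>carrier G. (\<forall>C\<in>set ws. g <# C = C) \<longrightarrow> g = \<one>)"
proof (rule ccontr)
  assume A: "\<not> ?thesis"
  define \<Omega> where "\<Omega> = left_cosets G H"
  define n where "n = card \<Omega>"
  define P where "P = {x \<in> carrier G. prime (ord x)}"
  define W where "W = {ws. set ws \<subseteq> \<Omega> \<and> length ws = t}"
  define B where "B = (\<lambda>x. {ws. set ws \<subseteq> fixset G H x \<and> length ws = t})"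
  have finO: "finite \<Omega>" unfolding \<Omega>_def using finite_cosets[OF H fin] .
  have n0: "n > 0" unfolding n_def \<Omega>_def using finite_cosets[OF H fin] H_coset[OF H] card_gt_0_iff by blast
  have finP: "finite P" unfolding P_def using fin by simp
  have sub: "W \<subseteq> (\<Union>x\<in>P. B x)"
  proof
    fix ws assume ws: "ws \<in> W"
    then have ws1: "set ws \<subseteq> \<Omega>" "length ws = t" unfolding W_def by auto
    then obtain g where g: "g \<in> carrier G" "\<forall>C\<in>set ws. g <# C = C" "g \<noteq> \<one>" using A unfolding \<Omega>_def by blast
    obtain k :: nat where k: "prime (ord (g [^] k))" using prime_power[OF fin g(1) g(3)] by blast
    have xP: "g [^] k \<in> P" unfolding P_def using k g(1) by simp
    have "\<forall>C\<in>set ws. (g [^] k) <# C = C" using pow_fix[OF H g(1)] g(2) ws1(1) unfolding \<Omega>_def by blast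
    then have "set ws \<subseteq> fixset G H (g [^] k)" using ws1(1) unfolding fixset_def \<Omega>_def by blast
    then have "ws \<in> B (g [^] k)" unfolding B_def using ws1 by simp
    then show "ws \<in> (\<Union>x\<in>P. B x)" using xP by blast
  qed
  have cW: "card W = n ^ t" unfolding W_def n_def using card_lists_length_eq[OF finO] by simp
  have cB: "card (B x) = perm_char G H x ^ t" for x
  proof -
    have "finite (fixset G H x)" using finO unfolding fixset_def \<Omega>_def by simp
    then show ?thesis unfolding B_def perm_char_def fixset_def[symmetric] using card_lists_length_eq by blast
  qed
  have finB: "finite (\<Union>x\<in>P. B x)"
  proof -
    have "finite (fixset G H x)" for x using finO unfolding fixset_def \<Omega>_def by simp
    then have "finite (B x)" for x unfolding B_def using finite_lists_length_eq by blast
    then show ?thesis using finP by blast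
  qed
  have "n ^ t \<le> card (\<Union>x\<in>P. B x)" using card_mono[OF finB sub] cW by simp
  also have "\<dots> \<le> (\<Sum>x\<in>P. card (B x))" using card_UN_le[OF finP] .
  also have "\<dots> = (\<Sum>x\<in>P. perm_char G H x ^ t)" using cB by simp
  finally have le: "real n ^ t \<le> (\<Sum>x\<in>P. real (perm_char G H x) ^ t)"
    by (metis (mono_tags, lifting) of_nat_le_iff of_nat_power of_nat_sum sum.cong)
  have "(\<Sum>x\<in>P. real (perm_char G H x) ^ t) = Q G H t * real n ^ t"
    using Q_eq[OF H fin, of t] unfolding n_def \<Omega>_def P_def by simp
  also have "\<dots> < real n ^ t" using Q1 n0 by simp
  finally show False using le by simp
qed

end

context group begin

lemma depth_bound:
  assumes H: "subgroup H G" and fin: "finite (carrier G)" and ne: "H \<noteq> {\<one>}"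
    and Q1: "Q G H t < 1"
  shows "2 \<le> t \<and> has_depth G H (2 * t - 1)"
proof -
  obtain ws where ws: "set ws \<subseteq> left_cosets G H" "length ws = t"
    and stab: "\<And>g. g \<in> carrier G \<Longrightarrow> (\<forall>C\<in>set ws. g <# C = C) \<Longrightarrow> g = \<one>"
    using good_tuple[OF H fin Q1] by blast
  have Hc: "H \<subseteq> carrier G" using subgroup.subset[OF H] .
  have wsi: "\<exists>a. a \<in> carrier G \<and> ws ! i = a <# H" if "i < t" for i
  proof -
    have "ws ! i \<in> left_cosets G H" using ws that nth_mem by blast
    then show ?thesis unfolding left_cosets_def by blast
  qed
  have t2: "2 \<le> t"
  proof (rule ccontr)
    assume "\<not> 2 \<le> t"
    moreover have "t \<noteq> 0"
    proof
      assume "t = 0"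
      then have "ws = []" using ws by simp
      have "h = \<one>" if "h \<in> H" for h
      proof -
        have "h \<in> carrier G" using Hc that by blast
        then show "h = \<one>" using stab \<open>ws = []\<close> by simp
      qed
      then have "H \<subseteq> {\<one>}" by blast
    then have "H = {\<one>}" using subgroup.one_closed[OF H] by blast
    then show False using ne by simp
    qed
    ultimately have t1: "t = 1" by linarith
    obtain a where a: "a \<in> carrier G" "ws ! 0 = a <# H" using wsi[of 0] t1 by auto
    have wsa: "set ws = {a <# H}" using ws(2) t1 a(2) by (cases ws) auto
    have "h = \<one>" if h: "h \<in> H" for h
    proof -
      have hc: "h \<in> carrier G" using h Hc by blast
      define g where "g = a \<otimes> h \<otimes> inv a"
      have gc: "g \<in> carrier G" using a hc by (simp add: g_def)
      have "inv a \<otimes> g \<otimes> a = h" using a hc by (simp add: g_def m_assoc)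
      then have "g <# (a <# H) = a <# H" using lcos_fix[OF H a(1) gc] h by simp
      then have "g = \<one>" using stab[OF gc] wsa by simp
      then show "h = \<one>" using \<open>inv a \<otimes> g \<otimes> a = h\<close> a by simp
    qed
    then have "H \<subseteq> {\<one>}" by blast
    then have "H = {\<one>}" using subgroup.one_closed[OF H] by blast
    then show False using ne by simp
  qed
  define m where "m = t - 1"
  have m1: "1 \<le> m" using t2 m_def by simp
  have tm: "t = Suc m" using t2 m_def by simp
  define r where "r = (\<lambda>i. if i \<le> m then (SOME a. a \<in> carrier G \<and> ws ! i = a <# H) else \<one>)"
  have rr: "r i \<in> carrier G \<and> ws ! i = r i <# H" if "i \<le> m" for i
  proof -
    have "\<exists>a. a \<in> carrier G \<and> ws ! i = a <# H" using wsi that tm by simp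
    then have "(SOME a. a \<in> carrier G \<and> ws ! i = a <# H) \<in> carrier G \<and> ws ! i = (SOME a. a \<in> carrier G \<and> ws ! i = a <# H) <# H"
      by (rule someI_ex)
    then show ?thesis unfolding r_def using that by simp
  qed
  have rc: "r i \<in> carrier G" for i
    using rr[of i] by (cases "i \<le> m") (auto simp: r_def)
  have base: "u = \<one>" if u: "u \<in> H"
    and cond: "\<And>i. 1 \<le> i \<Longrightarrow> i \<le> m \<Longrightarrow> inv (inv (r 0) \<otimes> r i) \<otimes> u \<otimes> (inv (r 0) \<otimes> r i) \<in> H" for u
  proof -
    have uc: "u \<in> carrier G" using u Hc by blast
    define g where "g = r 0 \<otimes> u \<otimes> inv (r 0)"
    have gc: "g \<in> carrier G" using rc uc by (simp add: g_def)
    have "\<forall>C\<in>set ws. g <# C = C"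
    proof
      fix C assume "C \<in> set ws"
      then obtain i where i: "i < t" "C = ws ! i" using ws(2) by (metis in_set_conv_nth)
      have im: "i \<le> m" using i tm by simp
      have "inv (r i) \<otimes> g \<otimes> r i \<in> H"
      proof (cases "i = 0")
        case True
        then show ?thesis using u rc uc by (simp add: g_def m_assoc)
      next
        case False
        have "inv (r i) \<otimes> g \<otimes> r i = inv (inv (r 0) \<otimes> r i) \<otimes> u \<otimes> (inv (r 0) \<otimes> r i)"
          using rc uc by (simp add: g_def m_assoc inv_mult_group)
        then show ?thesis using cond[of i] False im by simp
      qed
      then show "g <# C = C" using lcos_fix[OF H rc gc] rr[OF im] i(2) by simp
    qed
    then have "g = \<one>" using stab gc by blast
    then have "r 0 \<otimes> u \<otimes> inv (r 0) = \<one>" unfolding g_def .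
    then have "inv (r 0) \<otimes> (r 0 \<otimes> u \<otimes> inv (r 0)) \<otimes> r 0 = inv (r 0) \<otimes> \<one> \<otimes> r 0" by simp
    then show "u = \<one>" using rc uc by (simp add: m_assoc)
  qed
  have fr1: "map (\<lambda>i. inv (r i) \<otimes> r (Suc i)) [0..<m] \<in> tuples G m"
    by (rule free_from_r(1)[OF H m1 rc base])
  have S: "bimod_summand G H H H (tuples G (m + 1)) (tuples G m)"
    by (rule summand_free[OF H fin _ m1 fr1 free_from_r(2)[OF H m1 rc base]]) simp
  have "has_depth G H (2 * m + 1)" unfolding has_depth_def
    by (rule disjI2, rule disjI2, rule exI[of _ m]) (use S m1 in simp)
  moreover have "2 * m + 1 = 2 * t - 1" using tm by simp
  ultimately show ?thesis using t2 by simp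
qed

end

theorem proposition2p6:
  fixes G :: "('a, 'b) monoid_scheme" and H :: "'a set"
  assumes "group G" and "finite (carrier G)" and "subgroup H G"
    and "H \<noteq> {\<one>\<^bsub>G\<^esub>}" and "core_free G H"
  shows "(\<forall>t::nat. t > 0 \<longrightarrow> Q G H t < 1 \<longrightarrow> depth G H \<le> 2 * t - 1)
       \<and> (Q G H 2 < 1 \<longrightarrow> depth G H = 3)"
proof -
  interpret group G by (rule assms(1))
  have H: "subgroup H G" and fin: "finite (carrier G)" using assms by auto
  obtain g b where g: "g \<in> carrier G" and b: "b \<in> H" and nn: "g \<otimes>\<^bsub>G\<^esub> b \<otimes>\<^bsub>G\<^esub> inv\<^bsub>G\<^esub> g \<notin> H"
    using exists_nonnormal[OF H assms(4) assms(5)] by blast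
  have P1: "depth G H \<le> 2 * t - 1" if "t > 0" "Q G H t < 1" for t
  proof -
    have d: "2 \<le> t \<and> has_depth G H (2 * t - 1)" using depth_bound[OF H fin assms(4) that(2)] .
    then have "0 < 2 * t - 1 \<and> has_depth G H (2 * t - 1)" by simp
    then show ?thesis unfolding depth_def by (rule Least_le)
  qed
  have P2: "depth G H = 3" if Q2: "Q G H 2 < 1"
  proof -
    have h3: "has_depth G H (2 * 2 - 1)" using depth_bound[OF H fin assms(4) Q2] by blast
    have n1: "\<not> has_depth G H 1"
      unfolding has_depth_def using not_depth1[OF H fin g b nn] by auto
    have n2: "\<not> has_depth G H 2"
    proof
      assume "has_depth G H 2"
      then obtain n where n: "n \<ge> 1" "2 = 2 * n" "bimod_summand G H (carrier G) H (tuples G (n + 1)) (tuples G n)"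
        unfolding has_depth_def by auto
      then have "n = 1" by simp
      then show False using n(3) not_depth2[OF H fin g b nn] by (simp add: numeral_2_eq_2)
    qed
    show ?thesis unfolding depth_def
    proof (rule Least_equality)
      show "0 < (3::nat) \<and> has_depth G H 3" using h3 by simp
    next
      fix y :: nat assume y: "0 < y \<and> has_depth G H y"
      show "3 \<le> y"
      proof (rule ccontr)
        assume "\<not> 3 \<le> y"
        then have "y = 1 \<or> y = 2" using y by linarith
        then show False using y n1 n2 by blast
      qed
    qed
  qed
  show ?thesis using P1 P2 by blast
qed


end
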